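(* Let $N\ge1$ be an integer and $\varphi:\mathcal S_{-1,N}\to\mathbb C$ a Lie algebra homomorphism with $\varphi(h(N))\neq0$. Let $w=\sum_{\gamma\in\Gamma}a_\gamma X(\gamma)v$ ($a_\gamma\in\mathbb C$, finitely many nonzero) be a singular vector of $\hat M(\varphi)$ with $w\notin\mathbb Cv$. Let $H=\max\{\mathrm{Ht}(\gamma):a_\gamma\ne0\}$ and $l=\min\{\ell(\gamma): a_\gamma\neq0,\ \mathrm{Ht}(\gamma)=H\}$. Then: (1) every $\gamma=(\gamma_+,\gamma_0,\gamma_-)$ with $a_\gamma\neq0$, $\mathrm{Ht}(\gamma)=H$ and $\ell(\gamma)=l$ satisfies $\gamma_+=\gamma_-=\emptyset$, i.e. $X(\gamma)=h(\gamma_0)$; (2) if $\gamma$ is such an element with $\gamma_0=(m_1,\dots,m_l)$, then for every $1\le k\le l$ and every integer $1\le i\le -m_k$, setting $\bar\gamma_0=(m_1,\dots,\widehat{m_k},\dots,m_l)$ and $\gamma^{(i)}=((-i),\bar\gamma_0,(N+m_k+i))\in\Gamma$, we have $$a_{\gamma^{(i)}}=\frac{2a_\gamma}{\varphi(h(N))}\,\big|\{1\le j\le l: m_j=m_k\}\big|.$$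
   Context: Let $\mathfrak g=\mathfrak{sl}_2(\mathbb C)$ with basis $e,f,h$ ($[h,e]=2e$, $[h,f]=-2f$, $[e,f]=h$) and invariant form $(e|f)=1$, $(h|h)=2$, $(e|e)=(f|f)=(e|h)=(f|h)=0$. Let $\hat{\mathfrak g}=\mathfrak g\otimes\mathbb C[t^{\pm1}]\oplus\mathbb CK$ with $x(n)=x\otimes t^n$, $[x(m),y(n)]=[x,y](m+n)+m\delta_{m+n,0}(x|y)K$, $K$ central. For integers $N_1,N_2$ with $N_1+N_2\ge0$, $\mathcal S_{N_1,N_2}$ is the subalgebra of $\hat{\mathfrak g}$ spanned by $K$, $h(n)$ ($n\ge0$), $e(n)$ ($n>N_1$), $f(n)$ ($n>N_2$). For a Lie algebra homomorphism $\varphi:\mathcal S_{N_1,N_2}\to\mathbb C$, let $\mathbb Cv$ be the one-dimensional $\mathcal S_{N_1,N_2}$-module with $xv=\varphi(x)v$, and $\hat M(\varphi)=U(\hat{\mathfrak g})\otimes_{U(\mathcal S_{N_1,N_2})}\mathbb Cv$ (write $v$ for $1\otimes v$). A nonzero vector $w$ in $\hat M(\varphi)$ (or in a quotient of it) is a singular vector if $e(N_1+i)w=f(N_2+i)w=(h(i)-\varphi(h(i)))w=0$ for all integers $i\ge1$ and $h(0)w=\lambda w$ for some $\lambda\in\mathbb C$. Notation (case $N_1=-1$, $N_2=N$): for $m\in\mathbb Z$, $\Gamma_m$ is the set of finite nondecreasing tuples $(m_1\le\dots\le m_k)$ of integers $\le m$ ($k\ge0$, the empty tuple allowed); for such a tuple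 and $x\in\mathfrak g$, $x(\gamma)=x(m_1)\cdots x(m_k)$ ($=1$ if empty). $\Gamma$ is the set of triples $\gamma=(\gamma_+,\gamma_0,\gamma_-)$ with $\gamma_+,\gamma_0\in\Gamma_{-1}$, $\gamma_-\in\Gamma_N$, and $X(\gamma)=e(\gamma_+)h(\gamma_0)f(\gamma_-)$; the vectors $X(\gamma)v$, $\gamma\in\Gamma$, form a basis of $\hat M(\varphi)$. The length $\ell(\gamma)$ is the total number of entries of $\gamma_+,\gamma_0,\gamma_-$, the height $\mathrm{ht}(\gamma)$ is the sum of all entries, and the true height is $\mathrm{Ht}(\gamma)=\ell(\gamma)N-\mathrm{ht}(\gamma)$. The notation $(a)$ denotes a one-entry tuple. *)

theory Defs
  imports Complex_Main
begin

datatype sl2 = Ee | Ff | Hh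

datatype gen = L sl2 int | Kc

fun sbr :: "sl2 \<Rightarrow> sl2 \<Rightarrow> (complex \<times> sl2) list" where
  "sbr Hh Ee = [(2, Ee)]"
| "sbr Ee Hh = [(-2, Ee)]"
| "sbr Hh Ff = [(-2, Ff)]"
| "sbr Ff Hh = [(2, Ff)]"
| "sbr Ee Ff = [(1, Hh)]"
| "sbr Ff Ee = [(-1, Hh)]"
| "sbr _ _ = []"

fun sform :: "sl2 \<Rightarrow> sl2 \<Rightarrow> complex" where
  "sform Ee Ff = 1"
| "sform Ff Ee = 1"
| "sform Hh Hh = 2"
| "sform _ _ = 0"

fun brk :: "gen \<Rightarrow> gen \<Rightarrow> (complex \<times> gen) list" where
  "brk (L x m) (L y n) =
     map (\<lambda>(c, z). (c, L z (m + n))) (sbr x y)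
     @ (if m + n = 0 then [(of_int m * sform x y, Kc)] else [])"
| "brk _ _ = []"

definition hatg_module :: "(complex \<Rightarrow> 'v::ab_group_add \<Rightarrow> 'v) \<Rightarrow> (gen \<Rightarrow> 'v \<Rightarrow> 'v) \<Rightarrow> bool" where
  "hatg_module scale act \<longleftrightarrow>
     module scale
   \<and> (\<forall>g u w. act g (u + w) = act g u + act g w)
   \<and> (\<forall>g c u. act g (scale c u) = scale c (act g u))
   \<and> (\<forall>a b u. act a (act b u) - act b (act a u)
              = sum_list (map (\<lambda>(c, z). scale c (act z u)) (brk a b)))"

text \<open>Spanning generators of the subalgebra S_{N1,N2}.\<close>
fun inS :: "int \<Rightarrow> int \<Rightarrow> gen \<Rightarrow> bool" where
  "inS N1 N2 Kc = True"
| "inS N1 N2 (L Hh n) = (n \<ge> 0)"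
| "inS N1 N2 (L Ee n) = (n > N1)"
| "inS N1 N2 (L Ff n) = (n > N2)"

text \<open>A linear map phi on S (given on the spanning set) is a Lie algebra homomorphism
  to C iff it vanishes on all brackets of spanning elements.\<close>
definition lie_hom_S :: "int \<Rightarrow> int \<Rightarrow> (gen \<Rightarrow> complex) \<Rightarrow> bool" where
  "lie_hom_S N1 N2 \<phi> \<longleftrightarrow>
     (\<forall>a b. inS N1 N2 a \<and> inS N1 N2 b \<longrightarrow>
        sum_list (map (\<lambda>(c, z). c * \<phi> z) (brk a b)) = 0)"

definition Gamma_m :: "int \<Rightarrow> int list \<Rightarrow> bool" where
  "Gamma_m m xs \<longleftrightarrow> sorted xs \<and> (\<forall>x\<in>set xs. x \<le> m)"

type_synonym triple = "int list \<times> int list \<times> int list"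

text \<open>Gamma for general (N1,N2): gamma_+ in Gamma_{N1}, gamma_0 in Gamma_{-1}, gamma_- in Gamma_{N2}.
  For N1 = -1 this is the set Gamma of the paper.\<close>
definition Gamma :: "int \<Rightarrow> int \<Rightarrow> triple set" where
  "Gamma N1 N2 = {(p, z, q). Gamma_m N1 p \<and> Gamma_m (-1) z \<and> Gamma_m N2 q}"

definition Xlist :: "triple \<Rightarrow> gen list" where
  "Xlist \<gamma> = map (L Ee) (fst \<gamma>) @ map (L Hh) (fst (snd \<gamma>)) @ map (L Ff) (snd (snd \<gamma>))"

definition Xact :: "(gen \<Rightarrow> 'v \<Rightarrow> 'v) \<Rightarrow> triple \<Rightarrow> 'v \<Rightarrow> 'v" where
  "Xact act \<gamma> u = foldr act (Xlist \<gamma>) u"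

definition glen :: "triple \<Rightarrow> nat" where
  "glen \<gamma> = length (fst \<gamma>) + length (fst (snd \<gamma>)) + length (snd (snd \<gamma>))"

definition ght :: "triple \<Rightarrow> int" where
  "ght \<gamma> = sum_list (fst \<gamma>) + sum_list (fst (snd \<gamma>)) + sum_list (snd (snd \<gamma>))"

definition gHt :: "int \<Rightarrow> triple \<Rightarrow> int" where
  "gHt N \<gamma> = int (glen \<gamma>) * N - ght \<gamma>"

text \<open>(scale, act, v) is (isomorphic to) the induced module M(phi): a module for the
  affine algebra, v is a weight vector for S with character phi, and the vectors X(gamma) v,
  gamma in Gamma, are pairwise distinct and form a basis.  By the PBW theorem the induced
  module satisfies this, and any such triple is isomorphic to it.\<close>
definition induced_module ::
  "int \<Rightarrow> int \<Rightarrow> (gen \<Rightarrow> complex) \<Rightarrow> (complex \<Rightarrow> 'v::ab_group_add \<Rightarrow> 'v) \<Rightarrow> (gen \<Rightarrow> 'v \<Rightarrow> 'v) \<Rightarrow> 'v \<Rightarrow> bool" where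
  "induced_module N1 N2 \<phi> scale act v \<longleftrightarrow>
     hatg_module scale act
   \<and> (\<forall>g. inS N1 N2 g \<longrightarrow> act g v = scale (\<phi> g) v)
   \<and> inj_on (\<lambda>\<gamma>. Xact act \<gamma> v) (Gamma N1 N2)
   \<and> module.independent scale ((\<lambda>\<gamma>. Xact act \<gamma> v) ` Gamma N1 N2)
   \<and> module.span scale ((\<lambda>\<gamma>. Xact act \<gamma> v) ` Gamma N1 N2) = UNIV"

definition singular ::
  "int \<Rightarrow> int \<Rightarrow> (gen \<Rightarrow> complex) \<Rightarrow> (complex \<Rightarrow> 'v::ab_group_add \<Rightarrow> 'v) \<Rightarrow> (gen \<Rightarrow> 'v \<Rightarrow> 'v) \<Rightarrow> 'v \<Rightarrow> bool" where
  "singular N1 N2 \<phi> scale act w \<longleftrightarrow>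
     w \<noteq> 0
   \<and> (\<forall>i::int. i \<ge> 1 \<longrightarrow>
        act (L Ee (N1 + i)) w = 0 \<and> act (L Ff (N2 + i)) w = 0
      \<and> act (L Hh i) w = scale (\<phi> (L Hh i)) w)
   \<and> (\<exists>\<mu>. act (L Hh 0) w = scale \<mu> w)"

end

theory Submission
  imports Defs "HOL-Library.Multiset"
begin

locale SL = module scale for scale :: "complex \<Rightarrow> 'v::ab_group_add \<Rightarrow> 'v" (infixr \<open>*s\<close> 75) +
  fixes act :: "gen \<Rightarrow> 'v \<Rightarrow> 'v" and v :: 'v and \<phi> :: "gen \<Rightarrow> complex" and N :: int
  assumes N1: "N \<ge> 1"
  and hom: "lie_hom_S (-1) N \<phi>"
  and IM: "induced_module (-1) N \<phi> scale act v"
begin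

lemma act_add: "act g (x + y) = act g x + act g y"
  using IM unfolding induced_module_def hatg_module_def by blast
lemma act_scale: "act g (c *s x) = c *s act g x"
  using IM unfolding induced_module_def hatg_module_def by blast
lemma act_br: "act a (act b u) - act b (act a u) = sum_list (map (\<lambda>(c, z). c *s (act z u)) (brk a b))"
  using IM unfolding induced_module_def hatg_module_def by blast
lemma act_v: "inS (-1) N g \<Longrightarrow> act g v = \<phi> g *s v"
  using IM unfolding induced_module_def by blast

lemma act_zero[simp]: "act g 0 = 0"
  using act_add[of g 0 0] by simp
lemma act_neg: "act g (- x) = - act g x"
  using act_add[of g x "-x"] by (simp add: eq_neg_iff_add_eq_0 add.commute)
lemma act_diff: "act g (x - y) = act g x - act g y"
  using act_add[of g x "-y"] by (simp add: act_neg)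
lemma act_sum: "act g (sum f A) = sum (\<lambda>i. act g (f i)) A"
  by (induction A rule: infinite_finite_induct) (auto simp: act_add)
lemma act_sum_mset: "act g (\<Sum>x\<in>#M. f x) = (\<Sum>x\<in>#M. act g (f x))"
  by (induction M) (auto simp: act_add)

lemma comm: "act a (act b u) = act b (act a u) + sum_list (map (\<lambda>(c, z). c *s (act z u)) (brk a b))"
  using act_br[of a b u] by (simp add: algebra_simps)

lemma C_ee: "act (L Ee m) (act (L Ee n) u) = act (L Ee n) (act (L Ee m) u)"
  using comm[of "L Ee m" "L Ee n" u] by simp
lemma C_ff: "act (L Ff m) (act (L Ff n) u) = act (L Ff n) (act (L Ff m) u)"
  using comm[of "L Ff m" "L Ff n" u] by simp
lemma C_eh: "act (L Ee m) (act (L Hh a) u) = act (L Hh a) (act (L Ee m) u) + (-2) *s act (L Ee (m+a)) u"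
  using comm[of "L Ee m" "L Hh a" u] by simp
lemma C_ef: "act (L Ee m) (act (L Ff n) u) = act (L Ff n) (act (L Ee m) u) + act (L Hh (m+n)) u
   + (if m + n = 0 then of_int m *s act Kc u else 0)"
  using comm[of "L Ee m" "L Ff n" u] by simp
lemma C_fe: "act (L Ff n) (act (L Ee m) u) = act (L Ee m) (act (L Ff n) u) + (-1) *s act (L Hh (n+m)) u
   + (if n + m = 0 then of_int n *s act Kc u else 0)"
  using comm[of "L Ff n" "L Ee m" u] by simp
lemma C_fh: "act (L Ff n) (act (L Hh a) u) = act (L Hh a) (act (L Ff n) u) + 2 *s act (L Ff (n+a)) u"
  using comm[of "L Ff n" "L Hh a" u] by simp
lemma C_he: "act (L Hh c) (act (L Ee b) u) = act (L Ee b) (act (L Hh c) u) + 2 *s act (L Ee (c+b)) u"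
  using comm[of "L Hh c" "L Ee b" u] by simp
lemma C_hh: "act (L Hh c) (act (L Hh a) u) = act (L Hh a) (act (L Hh c) u)
   + (if c + a = 0 then (of_int c * 2) *s act Kc u else 0)"
  using comm[of "L Hh c" "L Hh a" u] by simp
lemma C_hf: "act (L Hh c) (act (L Ff n) u) = act (L Ff n) (act (L Hh c) u) + (-2) *s act (L Ff (c+n)) u"
  using comm[of "L Hh c" "L Ff n" u] by simp
lemma C_K: "act Kc (act g u) = act g (act Kc u)"
  using comm[of Kc g u] by simp

lemma phi_br: "inS (-1) N a \<Longrightarrow> inS (-1) N b \<Longrightarrow> sum_list (map (\<lambda>(c, z). c * \<phi> z) (brk a b)) = 0"
  using hom unfolding lie_hom_S_def by blast

lemma phi_e: "m \<ge> 0 \<Longrightarrow> \<phi> (L Ee m) = 0"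
  using phi_br[of "L Hh 0" "L Ee m"] by (auto split: if_splits)
lemma phi_f: "n > N \<Longrightarrow> \<phi> (L Ff n) = 0"
  using phi_br[of "L Hh 0" "L Ff n"] N1 by (auto split: if_splits)
lemma phi_h: "c > N \<Longrightarrow> \<phi> (L Hh c) = 0"
  using phi_br[of "L Ee 0" "L Ff c"] N1 by (auto split: if_splits)

lemma e_v: "m \<ge> 0 \<Longrightarrow> act (L Ee m) v = 0"
  using act_v[of "L Ee m"] phi_e[of m] by simp
lemma f_v: "n > N \<Longrightarrow> act (L Ff n) v = 0"
  using act_v[of "L Ff n"] phi_f[of n] by simp
lemma h_v: "c \<ge> 0 \<Longrightarrow> act (L Hh c) v = \<phi> (L Hh c) *s v"
  using act_v[of "L Hh c"] by simp
lemma K_v: "act Kc v = \<phi> Kc *s v"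
  using act_v[of Kc] by simp


definition b :: "int multiset \<Rightarrow> int multiset \<Rightarrow> int multiset \<Rightarrow> 'v" where
  "b P Z Q = foldr act (map (L Ee) (sorted_list_of_multiset P) @ map (L Hh) (sorted_list_of_multiset Z)
      @ map (L Ff) (sorted_list_of_multiset Q)) v"

lemma foldr_perm:
  assumes "\<And>x y. x \<in> set xs \<Longrightarrow> y \<in> set xs \<Longrightarrow> act x \<circ> act y = act y \<circ> act x"
    and "mset xs = mset ys"
  shows "foldr act xs u = foldr act ys u"
proof -
  have "fold act (rev xs) = fold act (rev ys)"
    by (rule fold_multiset_equiv) (use assms in auto)
  then show ?thesis by (simp add: foldr_conv_fold)
qed

lemma bE: "act (L Ee m) (b P Z Q) = b (add_mset m P) Z Q"
proof -
  let ?R = "foldr act (map (L Hh) (sorted_list_of_multiset Z) @ map (L Ff) (sorted_list_of_multiset Q)) v"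
  have "foldr act (map (L Ee) (m # sorted_list_of_multiset P)) ?R
      = foldr act (map (L Ee) (sorted_list_of_multiset (add_mset m P))) ?R"
    by (rule foldr_perm) (auto simp: fun_eq_iff C_ee)
  then show ?thesis by (simp add: b_def)
qed

lemma bH: assumes "\<forall>x\<in>#Z. x \<le> -1" "a \<le> -1"
  shows "act (L Hh a) (b {#} Z Q) = b {#} (add_mset a Z) Q"
proof -
  let ?R = "foldr act (map (L Ff) (sorted_list_of_multiset Q)) v"
  have "foldr act (map (L Hh) (a # sorted_list_of_multiset Z)) ?R
      = foldr act (map (L Hh) (sorted_list_of_multiset (add_mset a Z))) ?R"
  proof (rule foldr_perm)
    fix x y assume "x \<in> set (map (L Hh) (a # sorted_list_of_multiset Z))" "y \<in> set (map (L Hh) (a # sorted_list_of_multiset Z))"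
    then obtain c d where "x = L Hh c" "y = L Hh d" "c \<le> -1" "d \<le> -1" using assms by auto
    then show "act x \<circ> act y = act y \<circ> act x" by (auto simp: fun_eq_iff C_hh[of c d])
  qed simp
  then show ?thesis by (simp add: b_def)
qed

lemma bF: "act (L Ff n) (b {#} {#} Q) = b {#} {#} (add_mset n Q)"
proof -
  have "foldr act (map (L Ff) (n # sorted_list_of_multiset Q)) v
      = foldr act (map (L Ff) (sorted_list_of_multiset (add_mset n Q))) v"
    by (rule foldr_perm) (auto simp: fun_eq_iff C_ff)
  then show ?thesis by (simp add: b_def)
qed

lemma b0: "b {#} {#} {#} = v" by (simp add: b_def)

lemma K_foldr: "act Kc (foldr act ws v) = \<phi> Kc *s foldr act ws v"
  by (induction ws) (auto simp: K_v C_K act_scale)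

lemma bK: "act Kc (b P Z Q) = \<phi> Kc *s b P Z Q"
  unfolding b_def by (rule K_foldr)

definition HT :: "int multiset \<Rightarrow> int multiset \<Rightarrow> int multiset \<Rightarrow> int" where
  "HT P Z Q = (\<Sum>x\<in>#P. N - x) + (\<Sum>x\<in>#Z. N - x) + (\<Sum>x\<in>#Q. N - x)"

definition inG :: "int multiset \<Rightarrow> int multiset \<Rightarrow> int multiset \<Rightarrow> bool" where
  "inG P Z Q \<longleftrightarrow> (\<forall>x\<in>#P. x \<le> -1) \<and> (\<forall>x\<in>#Z. x \<le> -1) \<and> (\<forall>x\<in>#Q. x \<le> N)"

definition W :: "int \<Rightarrow> 'v set" where
  "W k = span {b P Z Q | P Z Q. inG P Z Q \<and> HT P Z Q \<le> k}"

definition Whf :: "int \<Rightarrow> 'v set" where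
  "Whf k = span {b {#} Z Q | Z Q. inG {#} Z Q \<and> HT {#} Z Q \<le> k}"

lemma W_mono: "k \<le> k' \<Longrightarrow> W k \<subseteq> W k'"
  unfolding W_def by (rule span_mono) (smt (verit) mem_Collect_eq subsetI)
lemma Whf_mono: "k \<le> k' \<Longrightarrow> Whf k \<subseteq> Whf k'"
  unfolding Whf_def by (rule span_mono) (smt (verit) mem_Collect_eq subsetI)
lemma Whf_W: "Whf k \<subseteq> W k"
  unfolding W_def Whf_def by (rule span_mono) auto
lemma W_base: "inG P Z Q \<Longrightarrow> HT P Z Q \<le> k \<Longrightarrow> b P Z Q \<in> W k"
  unfolding W_def by (rule span_base) auto
lemma Whf_base: "inG {#} Z Q \<Longrightarrow> HT {#} Z Q \<le> k \<Longrightarrow> b {#} Z Q \<in> Whf k"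
  unfolding Whf_def by (rule span_base) auto

lemma W_map:
  assumes "\<And>P Z Q. inG P Z Q \<Longrightarrow> HT P Z Q \<le> k \<Longrightarrow> act g (b P Z Q) \<in> W (HT P Z Q + d)"
    and "u \<in> W k"
  shows "act g u \<in> W (k + d)"
  using assms(2) unfolding W_def[of k]
proof (induction rule: span_induct_alt)
  case base then show ?case by (simp add: W_def span_zero)
next
  case (step c x y)
  then obtain P Z Q where x: "x = b P Z Q" "inG P Z Q" "HT P Z Q \<le> k" by blast
  have "act g x \<in> W (k + d)" using assms(1)[OF x(2,3)] W_mono[of "HT P Z Q + d" "k+d"] x by auto
  then show ?case using step by (auto simp: act_add act_scale W_def intro: span_add span_scale)
qed

lemma Whf_map:
  assumes "\<And>Z Q. inG {#} Z Q \<Longrightarrow> HT {#} Z Q \<le> k \<Longrightarrow> act g (b {#} Z Q) \<in> Whf (HT {#} Z Q + d)"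
    and "u \<in> Whf k"
  shows "act g u \<in> Whf (k + d)"
  using assms(2) unfolding Whf_def[of k]
proof (induction rule: span_induct_alt)
  case base then show ?case by (simp add: Whf_def span_zero)
next
  case (step c x y)
  then obtain Z Q where x: "x = b {#} Z Q" "inG {#} Z Q" "HT {#} Z Q \<le> k" by blast
  have "act g x \<in> Whf (k + d)" using assms(1)[OF x(2,3)] Whf_mono[of "HT {#} Z Q + d" "k+d"] x by auto
  then show ?case using step by (auto simp: act_add act_scale Whf_def intro: span_add span_scale)
qed

lemma W_sub: "subspace (W k)" unfolding W_def by (rule subspace_span)
lemma Whf_sub: "subspace (Whf k)" unfolding Whf_def by (rule subspace_span)

lemma W_add: "x \<in> W k \<Longrightarrow> y \<in> W k \<Longrightarrow> x + y \<in> W k" unfolding W_def by (rule span_add)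
lemma W_diff: "x \<in> W k \<Longrightarrow> y \<in> W k \<Longrightarrow> x - y \<in> W k" unfolding W_def by (rule span_diff)
lemma W_scale: "x \<in> W k \<Longrightarrow> c *s x \<in> W k" unfolding W_def by (rule span_scale)
lemma W_zero: "0 \<in> W k" unfolding W_def by (rule span_zero)
lemma W_sum: "(\<And>x. x \<in># M \<Longrightarrow> f x \<in> W k) \<Longrightarrow> (\<Sum>x\<in>#M. f x) \<in> W k"
  by (induction M) (auto intro: W_add W_zero)
lemma Whf_add: "x \<in> Whf k \<Longrightarrow> y \<in> Whf k \<Longrightarrow> x + y \<in> Whf k" unfolding Whf_def by (rule span_add)
lemma Whf_diff: "x \<in> Whf k \<Longrightarrow> y \<in> Whf k \<Longrightarrow> x - y \<in> Whf k" unfolding Whf_def by (rule span_diff)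
lemma Whf_scale: "x \<in> Whf k \<Longrightarrow> c *s x \<in> Whf k" unfolding Whf_def by (rule span_scale)
lemma Whf_zero: "0 \<in> Whf k" unfolding Whf_def by (rule span_zero)
lemma Whf_sum: "(\<And>x. x \<in># M \<Longrightarrow> f x \<in> Whf k) \<Longrightarrow> (\<Sum>x\<in>#M. f x) \<in> Whf k"
  by (induction M) (auto intro: Whf_add Whf_zero)

lemma HT_simps[simp]:
  "HT (add_mset x P) Z Q = HT P Z Q + (N - x)"
  "HT P (add_mset x Z) Q = HT P Z Q + (N - x)"
  "HT P Z (add_mset x Q) = HT P Z Q + (N - x)"
  by (simp_all add: HT_def)

lemma HT_diff:
  "x \<in># P \<Longrightarrow> HT (P - {#x#}) Z Q = HT P Z Q - (N - x)"
  "x \<in># Z \<Longrightarrow> HT P (Z - {#x#}) Q = HT P Z Q - (N - x)"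
  "x \<in># Q \<Longrightarrow> HT P Z (Q - {#x#}) = HT P Z Q - (N - x)"
  by (metis HT_simps insert_DiffM diff_add_cancel add_diff_cancel_right')+

lemma inG_simps[simp]:
  "inG (add_mset x P) Z Q \<longleftrightarrow> x \<le> -1 \<and> inG P Z Q"
  "inG P (add_mset x Z) Q \<longleftrightarrow> x \<le> -1 \<and> inG P Z Q"
  "inG P Z (add_mset x Q) \<longleftrightarrow> x \<le> N \<and> inG P Z Q"
  "inG {#} {#} {#}"
  by (auto simp: inG_def)

lemma inG_diff:
  "inG P Z Q \<Longrightarrow> inG (P - M) Z Q"
  "inG P Z Q \<Longrightarrow> inG P (Z - M) Q"
  "inG P Z Q \<Longrightarrow> inG P Z (Q - M)"
  by (auto simp: inG_def dest: in_diffD)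

end


lemma add_diff_in: "x \<in># P \<Longrightarrow> add_mset y P - {#x#} = add_mset y (P - {#x#})"
  by (metis add_mset_commute add_mset_remove_trivial insert_DiffM)

lemma sum_mset_cong': "(\<And>x. x \<in># M \<Longrightarrow> f x = g x) \<Longrightarrow> (\<Sum>x\<in>#M. f x) = (\<Sum>x\<in>#M. g x)"
  by (metis image_mset_cong)

context SL begin

lemma act_scale_sum: "act g (\<Sum>x\<in>#M. c x *s f x) = (\<Sum>x\<in>#M. c x *s act g (f x))"
  by (simp add: act_sum_mset act_scale)

lemma hE: assumes "a \<le> -1" "inG P Z Q"
  shows "act (L Hh a) (b P Z Q) = b P (add_mset a Z) Q + (\<Sum>x\<in>#P. 2 *s b (add_mset (a+x) (P - {#x#})) Z Q)"
  using assms(2)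
proof (induction P)
  case empty
  then show ?case using bH[of Z a Q] assms(1) by (simp add: inG_def)
next
  case (add x P)
  have IH: "act (L Hh a) (b P Z Q) = b P (add_mset a Z) Q + (\<Sum>y\<in>#P. 2 *s b (add_mset (a+y) (P - {#y#})) Z Q)"
    using add by simp
  have "act (L Hh a) (b (add_mset x P) Z Q) = act (L Hh a) (act (L Ee x) (b P Z Q))" by (simp add: bE)
  also have "\<dots> = act (L Ee x) (act (L Hh a) (b P Z Q)) + 2 *s b (add_mset (a+x) P) Z Q"
    unfolding C_he by (simp add: bE)
  also have "\<dots> = b (add_mset x P) (add_mset a Z) Q + (\<Sum>y\<in>#P. 2 *s b (add_mset x (add_mset (a+y) (P - {#y#}))) Z Q)
        + 2 *s b (add_mset (a+x) P) Z Q"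
    by (simp add: IH act_add act_sum_mset act_scale bE)
  also have "(\<Sum>y\<in>#P. 2 *s b (add_mset x (add_mset (a+y) (P - {#y#}))) Z Q)
       = (\<Sum>y\<in>#P. 2 *s b (add_mset (a+y) (add_mset x P - {#y#})) Z Q)"
    by (rule sum_mset_cong') (simp add: add_diff_in add_mset_commute)
  finally show ?case by (simp add: algebra_simps)
qed

lemma hE_bound: assumes "a \<le> -1" "inG P Z Q"
  shows "act (L Hh a) (b P Z Q) - b P (add_mset a Z) Q \<in> W (HT P Z Q - a)"
proof -
  have "(\<Sum>x\<in>#P. 2 *s b (add_mset (a+x) (P - {#x#})) Z Q) \<in> W (HT P Z Q - a)"
  proof (rule W_sum)
    fix x assume x: "x \<in># P"
    then have "x \<le> -1" using assms(2) by (auto simp: inG_def)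
    then show "2 *s b (add_mset (a+x) (P - {#x#})) Z Q \<in> W (HT P Z Q - a)"
      using x assms by (intro W_scale W_base) (auto simp: inG_diff HT_diff)
  qed
  then show ?thesis using hE[OF assms] by simp
qed

lemma hE_W: assumes "a \<le> -1" "u \<in> W k" shows "act (L Hh a) u \<in> W (k + (N - a))"
proof (rule W_map[OF _ assms(2)])
  fix P Z Q assume G: "inG P Z Q" "HT P Z Q \<le> k"
  have "b P (add_mset a Z) Q \<in> W (HT P Z Q + (N - a))" using G assms by (intro W_base) auto
  moreover have "act (L Hh a) (b P Z Q) - b P (add_mset a Z) Q \<in> W (HT P Z Q + (N - a))"
    using hE_bound[OF assms(1) G(1)] W_mono[of "HT P Z Q - a" "HT P Z Q + (N - a)"] N1 by auto
  ultimately show "act (L Hh a) (b P Z Q) \<in> W (HT P Z Q + (N - a))"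
    by (metis W_add diff_add_cancel)
qed

lemma hE_hf: assumes "a \<le> -1" "inG {#} Z Q"
  shows "act (L Hh a) (b {#} Z Q) = b {#} (add_mset a Z) Q"
  using hE[OF assms] by simp

lemma hE_Whf: assumes "a \<le> -1" "u \<in> Whf k" shows "act (L Hh a) u \<in> Whf (k + (N - a))"
proof (rule Whf_map[OF _ assms(2)])
  fix Z Q assume G: "inG {#} Z Q" "HT {#} Z Q \<le> k"
  show "act (L Hh a) (b {#} Z Q) \<in> Whf (HT {#} Z Q + (N - a))"
    using G assms by (simp add: hE_hf) (intro Whf_base, auto)
qed

lemma eE_W: assumes "x \<le> -1" "u \<in> W k" shows "act (L Ee x) u \<in> W (k + (N - x))"
proof (rule W_map[OF _ assms(2)])
  fix P Z Q assume G: "inG P Z Q" "HT P Z Q \<le> k"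
  show "act (L Ee x) (b P Z Q) \<in> W (HT P Z Q + (N - x))"
    using G assms by (simp add: bE) (intro W_base, auto)
qed

lemma F_kill: assumes "m > N" shows "act (L Ff m) (b {#} {#} Q) = 0"
proof (induction Q)
  case empty then show ?case using f_v[OF assms] by (simp add: b0)
next
  case (add x Q) then show ?case by (metis C_ff bF act_zero)
qed

lemma H_f: assumes "c \<ge> 0"
  shows "act (L Hh c) (b {#} {#} Q) = (\<Sum>n\<in>#Q. if c + n \<le> N then (-2) *s b {#} {#} (add_mset (c+n) (Q - {#n#})) else 0)
     + \<phi> (L Hh c) *s b {#} {#} Q"
proof (induction Q)
  case empty then show ?case using h_v[OF assms] by (simp add: b0)
next
  case (add n Q)
  have "act (L Hh c) (b {#} {#} (add_mset n Q)) = act (L Hh c) (act (L Ff n) (b {#} {#} Q))" by (simp add: bF)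
  also have "\<dots> = act (L Ff n) (act (L Hh c) (b {#} {#} Q)) + (-2) *s act (L Ff (c+n)) (b {#} {#} Q)"
    by (rule C_hf)
  also have "act (L Ff (c+n)) (b {#} {#} Q) = (if c + n \<le> N then b {#} {#} (add_mset (c+n) Q) else 0)"
    using F_kill[of "c+n" Q] by (simp add: bF)
  also have "act (L Ff n) (act (L Hh c) (b {#} {#} Q)) =
     (\<Sum>m\<in>#Q. if c + m \<le> N then (-2) *s b {#} {#} (add_mset n (add_mset (c+m) (Q - {#m#}))) else 0)
     + \<phi> (L Hh c) *s b {#} {#} (add_mset n Q)"
    by (simp add: add act_add act_sum_mset act_scale act_neg bF if_distrib[of "act _"] cong: if_cong)
  also have "(\<Sum>m\<in>#Q. if c + m \<le> N then (-2) *s b {#} {#} (add_mset n (add_mset (c+m) (Q - {#m#}))) else 0)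
     = (\<Sum>m\<in>#Q. if c + m \<le> N then (-2) *s b {#} {#} (add_mset (c+m) (add_mset n Q - {#m#})) else 0)"
    by (rule sum_mset_cong') (simp add: add_diff_in add_mset_commute)
  also have "(-2) *s (if c + n \<le> N then b {#} {#} (add_mset (c+n) Q) else 0)
     = (if c + n \<le> N then (-2) *s b {#} {#} (add_mset (c+n) (add_mset n Q - {#n#})) else 0)" by simp
  finally show ?case by (simp only: sum_mset.add_mset image_mset_add_mset ac_simps)
qed

end


lemma sum_mset_diff_distrib: "(\<Sum>x\<in>#M. (f x - g x :: 'a::ab_group_add)) = (\<Sum>x\<in>#M. f x) - (\<Sum>x\<in>#M. g x)"
  by (induction M) (auto simp: algebra_simps)

context SL begin

lemma W_neg: "x \<in> W k \<Longrightarrow> - x \<in> W k" unfolding W_def by (rule span_neg)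
lemma Whf_neg: "x \<in> Whf k \<Longrightarrow> - x \<in> Whf k" unfolding Whf_def by (rule span_neg)

lemma H_f_lead: assumes "c \<ge> 0" "inG {#} {#} Q"
  shows "act (L Hh c) (b {#} {#} Q) - (if c = N then \<phi> (L Hh N) *s b {#} {#} Q else 0) \<in> Whf (HT {#} {#} Q + N - c - 1)"
proof -
  have S: "(\<Sum>n\<in>#Q. if c + n \<le> N then (-2) *s b {#} {#} (add_mset (c+n) (Q - {#n#})) else 0) \<in> Whf (HT {#} {#} Q + N - c - 1)"
  proof (rule Whf_sum)
    fix n assume n: "n \<in># Q"
    show "(if c + n \<le> N then (-2) *s b {#} {#} (add_mset (c+n) (Q - {#n#})) else 0) \<in> Whf (HT {#} {#} Q + N - c - 1)"
      using n assms N1 by (auto intro!: Whf_neg Whf_scale Whf_base simp: Whf_zero inG_diff HT_diff)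
  qed
  have T: "\<phi> (L Hh c) *s b {#} {#} Q - (if c = N then \<phi> (L Hh N) *s b {#} {#} Q else 0) \<in> Whf (HT {#} {#} Q + N - c - 1)"
  proof (cases "c = N")
    case True then show ?thesis by (simp add: Whf_zero)
  next
    case False
    show ?thesis
    proof (cases "c < N")
      case True then show ?thesis using False assms by (auto intro!: Whf_scale Whf_base)
    next
      case False2: False
      then have "c > N" using False by simp
      then show ?thesis using False by (simp add: phi_h Whf_zero)
    qed
  qed
  show ?thesis using Whf_add[OF S T] H_f[OF assms(1), of Q] by (simp add: algebra_simps)
qed

lemma F_hf: assumes "n \<le> N" "inG {#} Z Q"
  shows "act (L Ff n) (b {#} Z Q) - b {#} Z (add_mset n Q) \<in> Whf (HT {#} Z Q - n)"
  using assms
proof (induction Z arbitrary: n)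
  case empty
  then show ?case by (simp add: bF Whf_zero)
next
  case (add a Z)
  let ?Y = "b {#} Z Q"
  have a: "a \<le> -1" and G: "inG {#} Z Q" using add by auto
  define R where "R = act (L Ff n) ?Y - b {#} Z (add_mset n Q)"
  have R: "R \<in> Whf (HT {#} Z Q - n)" using add.IH[of n] add.prems G unfolding R_def by auto
  define R' where "R' = act (L Ff (n+a)) ?Y - b {#} Z (add_mset (n+a) Q)"
  have R': "R' \<in> Whf (HT {#} Z Q - (n + a))" using add.IH[of "n+a"] add.prems G a unfolding R'_def by auto
  have e1: "b {#} (add_mset a Z) Q = act (L Hh a) ?Y" using hE_hf[OF a G] by simp
  have "act (L Ff n) (b {#} (add_mset a Z) Q) - b {#} (add_mset a Z) (add_mset n Q)
     = act (L Hh a) R + 2 *s (R' + b {#} Z (add_mset (n+a) Q))"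
    unfolding e1 C_fh R_def R'_def using hE_hf[OF a, of Z "add_mset n Q"] G add.prems
    by (simp add: act_diff)
  also have "\<dots> \<in> Whf (HT {#} (add_mset a Z) Q - n)"
  proof (intro Whf_add Whf_scale)
    show "act (L Hh a) R \<in> Whf (HT {#} (add_mset a Z) Q - n)"
      using hE_Whf[OF a R] by (simp add: algebra_simps)
    show "R' \<in> Whf (HT {#} (add_mset a Z) Q - n)"
      using R' Whf_mono[of "HT {#} Z Q - (n + a)" "HT {#} (add_mset a Z) Q - n"] N1 by auto
    show "b {#} Z (add_mset (n + a) Q) \<in> Whf (HT {#} (add_mset a Z) Q - n)"
      using G a add.prems by (intro Whf_base) auto
  qed
  finally show ?case .
qed

lemma F_hf_W: assumes "n \<le> N" "u \<in> Whf k" shows "act (L Ff n) u \<in> Whf (k + (N - n))"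
proof (rule Whf_map[OF _ assms(2)])
  fix Z Q assume G: "inG {#} Z Q" "HT {#} Z Q \<le> k"
  have "b {#} Z (add_mset n Q) \<in> Whf (HT {#} Z Q + (N - n))" using G assms by (intro Whf_base) auto
  moreover have "act (L Ff n) (b {#} Z Q) - b {#} Z (add_mset n Q) \<in> Whf (HT {#} Z Q + (N - n))"
    using F_hf[OF assms(1) G(1)] Whf_mono[of "HT {#} Z Q - n" "HT {#} Z Q + (N - n)"] N1 by auto
  ultimately show "act (L Ff n) (b {#} Z Q) \<in> Whf (HT {#} Z Q + (N - n))"
    by (metis Whf_add diff_add_cancel)
qed

definition LQ :: "int \<Rightarrow> int multiset \<Rightarrow> int multiset \<Rightarrow> int multiset \<Rightarrow> 'v" where
  "LQ j P Z Q = (\<Sum>n\<in>#Q. if j + n \<le> -1 then b P (add_mset (j+n) Z) (Q - {#n#})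
        else if j + n = N then \<phi> (L Hh N) *s b P Z (Q - {#n#}) else 0)"

definition LZ :: "int \<Rightarrow> int multiset \<Rightarrow> int multiset \<Rightarrow> int multiset \<Rightarrow> 'v" where
  "LZ j P Z Q = (\<Sum>a\<in>#Z. if j + a \<le> -1 then (-2) *s b (add_mset (j+a) P) (Z - {#a#}) Q else 0)"

lemma E_f: assumes "j \<ge> 0" "inG {#} {#} Q"
  shows "act (L Ee j) (b {#} {#} Q) - LQ j {#} {#} Q \<in> Whf (HT {#} {#} Q - j - 1)"
  using assms(2)
proof (induction Q)
  case empty then show ?case using e_v[OF assms(1)] by (simp add: b0 LQ_def Whf_zero)
next
  case (add n Q)
  let ?Y = "b {#} {#} Q"
  let ?k = "HT {#} {#} (add_mset n Q) - j - 1"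
  let ?T = "\<lambda>n' M. if j + n' \<le> -1 then b {#} (add_mset (j+n') {#}) (M - {#n'#})
        else if j + n' = N then \<phi> (L Hh N) *s b {#} {#} (M - {#n'#}) else 0"
  have nN: "n \<le> N" and G: "inG {#} {#} Q" using add by auto
  define R where "R = act (L Ee j) ?Y - LQ j {#} {#} Q"
  have R: "R \<in> Whf (HT {#} {#} Q - j - 1)" using add G unfolding R_def by auto
  have LQa: "LQ j {#} {#} (add_mset n Q) = ?T n (add_mset n Q) + (\<Sum>n'\<in>#Q. ?T n' (add_mset n Q))"
    unfolding LQ_def by simp
  define D1 where "D1 = act (L Ff n) (LQ j {#} {#} Q) - (\<Sum>n'\<in>#Q. ?T n' (add_mset n Q))"
  define D2 where "D2 = act (L Ff n) R"
  define D3 where "D3 = act (L Hh (j+n)) ?Y - ?T n (add_mset n Q)"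
  define D4 where "D4 = (if j + n = 0 then of_int j *s act Kc ?Y else 0)"
  have eq: "act (L Ee j) (b {#} {#} (add_mset n Q)) - LQ j {#} {#} (add_mset n Q) = D1 + D2 + D3 + D4"
    unfolding D1_def D2_def D3_def D4_def R_def LQa bF[symmetric] C_ef
    by (simp add: act_diff algebra_simps)
  have D1: "D1 \<in> Whf ?k"
  proof -
    have "D1 = (\<Sum>n'\<in>#Q. act (L Ff n) (?T n' Q) - ?T n' (add_mset n Q))"
      unfolding D1_def LQ_def act_sum_mset sum_mset_diff_distrib ..
    also have "\<dots> \<in> Whf ?k"
    proof (rule Whf_sum)
      fix n' assume n': "n' \<in># Q"
      have e: "add_mset n Q - {#n'#} = add_mset n (Q - {#n'#})" using n' by (rule add_diff_in)
      show "act (L Ff n) (?T n' Q) - ?T n' (add_mset n Q) \<in> Whf ?k"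
      proof (cases "j + n' \<le> -1")
        case True
        have "act (L Ff n) (b {#} {#j + n'#} (Q - {#n'#})) - b {#} {#j + n'#} (add_mset n (Q - {#n'#}))
            \<in> Whf (HT {#} {#j+n'#} (Q - {#n'#}) - n)"
          using F_hf[OF nN, of "{#j+n'#}" "Q - {#n'#}"] True G by (simp add: inG_diff)
        moreover have "HT {#} {#j+n'#} (Q - {#n'#}) - n \<le> ?k" using HT_diff(3)[OF n', of "{#}" "{#}"] N1 by simp
        ultimately have "act (L Ff n) (b {#} {#j + n'#} (Q - {#n'#})) - b {#} {#j + n'#} (add_mset n (Q - {#n'#})) \<in> Whf ?k"
          using Whf_mono by blast
        then show ?thesis using True e by simp
      next
        case False
        then show ?thesis using e by (auto simp: bF act_scale Whf_zero)
      qed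
    qed
    finally show ?thesis .
  qed
  have D2: "D2 \<in> Whf ?k" unfolding D2_def using F_hf_W[OF nN R] by (simp add: algebra_simps)
  have D3: "D3 \<in> Whf ?k"
  proof (cases "j + n \<le> -1")
    case True
    then show ?thesis unfolding D3_def using hE_hf[OF True G] by (simp add: Whf_zero)
  next
    case False
    then have A: "act (L Hh (j+n)) ?Y - (if j + n = N then \<phi> (L Hh N) *s ?Y else 0) \<in> Whf (HT {#} {#} Q + N - (j+n) - 1)"
      using H_f_lead[of "j+n" Q] G by simp
    have B: "?T n (add_mset n Q) = (if j + n = N then \<phi> (L Hh N) *s ?Y else 0)" using False by simp
    have X: "D3 \<in> Whf (HT {#} {#} Q + N - (j+n) - 1)" unfolding D3_def B by (rule A)
    have eq: "HT {#} {#} Q + N - (j+n) - 1 = ?k" by simp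
    show ?thesis using X unfolding eq .
  qed
  have D4: "D4 \<in> Whf ?k"
  proof (cases "j + n = 0")
    case True
    have "?Y \<in> Whf ?k" using G True N1 by (intro Whf_base) auto
    then show ?thesis unfolding D4_def using True by (simp add: bK Whf_scale)
  qed (simp add: D4_def Whf_zero)
  show ?case unfolding eq using D1 D2 D3 D4 by (intro Whf_add)
qed

end


context SL begin

lemma W_lead: "x - y \<in> W k1 \<Longrightarrow> y \<in> W k \<Longrightarrow> k1 \<le> k \<Longrightarrow> x \<in> W k"
  by (metis W_add W_mono diff_add_cancel subsetD)

lemma L_bound: assumes "j \<ge> 0" "inG P Z Q"
  shows "LZ j P Z Q + LQ j P Z Q \<in> W (HT P Z Q - j)"
proof (rule W_add)
  show "LZ j P Z Q \<in> W (HT P Z Q - j)" unfolding LZ_def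
  proof (rule W_sum)
    fix a assume a: "a \<in># Z"
    show "(if j + a \<le> -1 then (-2) *s b (add_mset (j+a) P) (Z - {#a#}) Q else 0) \<in> W (HT P Z Q - j)"
      using a assms HT_diff(2)[OF a, of P Q] by (auto intro!: W_neg W_scale W_base simp: W_zero inG_diff)
  qed
  show "LQ j P Z Q \<in> W (HT P Z Q - j)" unfolding LQ_def
  proof (rule W_sum)
    fix n assume n: "n \<in># Q"
    show "(if j + n \<le> -1 then b P (add_mset (j+n) Z) (Q - {#n#})
        else if j + n = N then \<phi> (L Hh N) *s b P Z (Q - {#n#}) else 0) \<in> W (HT P Z Q - j)"
    proof (cases "j + n \<le> -1")
      case True then show ?thesis using n assms HT_diff(3)[OF n, of P Z] by (auto intro!: W_base simp: inG_diff)
    next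
      case False
      show ?thesis
      proof (cases "j + n = N")
        case True
        have "b P Z (Q - {#n#}) \<in> W (HT P Z Q - j)"
          using n assms HT_diff(3)[OF n, of P Z] True by (intro W_base) (auto simp: inG_diff)
        then show ?thesis using False True by (simp add: W_scale)
      qed (use False in \<open>simp add: W_zero\<close>)
    qed
  qed
qed

lemma E0: assumes "j \<ge> 0" "inG {#} Z Q"
  shows "act (L Ee j) (b {#} Z Q) - (LZ j {#} Z Q + LQ j {#} Z Q) \<in> W (HT {#} Z Q - j - 1)"
  using assms
proof (induction Z arbitrary: j)
  case empty
  then show ?case using E_f[of j Q] Whf_W by (auto simp: LZ_def)
next
  case (add a Z)
  let ?Y = "b {#} Z Q"
  let ?k = "HT {#} (add_mset a Z) Q - j - 1"
  have a: "a \<le> -1" and G: "inG {#} Z Q" and j: "j \<ge> 0" using add by auto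
  have hY: "b {#} (add_mset a Z) Q = act (L Hh a) ?Y" using hE_hf[OF a G] by simp
  define R where "R = act (L Ee j) ?Y - (LZ j {#} Z Q + LQ j {#} Z Q)"
  have R: "R \<in> W (HT {#} Z Q - j - 1)" using add.IH[OF j G] unfolding R_def .
  let ?Ta = "if j + a \<le> -1 then (-2) *s b {#j+a#} Z Q else 0"
  let ?S = "(\<Sum>a'\<in>#Z. if j + a' \<le> -1 then (-2) *s b {#j+a'#} (add_mset a Z - {#a'#}) Q else 0)"
  have LZa: "LZ j {#} (add_mset a Z) Q = ?Ta + ?S" unfolding LZ_def by simp
  define D1 where "D1 = act (L Hh a) (LZ j {#} Z Q) - ?S"
  define D1' where "D1' = act (L Hh a) (LQ j {#} Z Q) - LQ j {#} (add_mset a Z) Q"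
  define D2 where "D2 = act (L Hh a) R"
  define D3 where "D3 = (-2) *s act (L Ee (j+a)) ?Y - ?Ta"
  have eq: "act (L Ee j) (b {#} (add_mset a Z) Q) - (LZ j {#} (add_mset a Z) Q + LQ j {#} (add_mset a Z) Q)
      = D1 + D1' + D2 + D3"
    unfolding D1_def D1'_def D2_def D3_def R_def LZa hY C_eh
    by (simp add: act_diff act_add algebra_simps)
  have D1: "D1 \<in> W ?k"
  proof -
    have "D1 = (\<Sum>a'\<in>#Z. act (L Hh a) (if j + a' \<le> -1 then (-2) *s b {#j+a'#} (Z - {#a'#}) Q else 0)
         - (if j + a' \<le> -1 then (-2) *s b {#j+a'#} (add_mset a Z - {#a'#}) Q else 0))"
      unfolding D1_def LZ_def act_sum_mset sum_mset_diff_distrib by simp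
    also have "\<dots> \<in> W ?k"
    proof (rule W_sum)
      fix a' assume a': "a' \<in># Z"
      have e: "add_mset a Z - {#a'#} = add_mset a (Z - {#a'#})" using a' by (rule add_diff_in)
      show "act (L Hh a) (if j + a' \<le> -1 then (-2) *s b {#j+a'#} (Z - {#a'#}) Q else 0)
         - (if j + a' \<le> -1 then (-2) *s b {#j+a'#} (add_mset a Z - {#a'#}) Q else 0) \<in> W ?k"
      proof (cases "j + a' \<le> -1")
        case True
        have G': "inG {#j+a'#} (Z - {#a'#}) Q" using True G by (simp add: inG_diff)
        have "act (L Hh a) (b {#j+a'#} (Z - {#a'#}) Q) - b {#j+a'#} (add_mset a (Z - {#a'#})) Q
            \<in> W (HT {#j+a'#} (Z - {#a'#}) Q - a)" by (rule hE_bound[OF a G'])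
        moreover have "HT {#j+a'#} (Z - {#a'#}) Q - a \<le> ?k" using HT_diff(2)[OF a', of "{#}" Q] N1 by simp
        ultimately have "act (L Hh a) (b {#j+a'#} (Z - {#a'#}) Q) - b {#j+a'#} (add_mset a (Z - {#a'#})) Q \<in> W ?k"
          using W_mono by blast
        then have "(-2) *s (act (L Hh a) (b {#j+a'#} (Z - {#a'#}) Q) - b {#j+a'#} (add_mset a (Z - {#a'#})) Q) \<in> W ?k"
          by (rule W_scale)
        moreover have "act (L Hh a) ((-2) *s b {#j+a'#} (Z - {#a'#}) Q) - (-2) *s b {#j+a'#} (add_mset a Z - {#a'#}) Q
          = (-2) *s (act (L Hh a) (b {#j+a'#} (Z - {#a'#}) Q) - b {#j+a'#} (add_mset a (Z - {#a'#})) Q)"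
          unfolding e by (simp only: act_scale scale_right_diff_distrib)
        ultimately show ?thesis using True by (simp only: if_True)
      next
        case False then show ?thesis by (simp add: W_zero)
      qed
    qed
    finally show ?thesis .
  qed
  have D1': "D1' = 0"
  proof -
    have "act (L Hh a) (LQ j {#} Z Q) = LQ j {#} (add_mset a Z) Q"
      unfolding LQ_def act_sum_mset
    proof (rule sum_mset_cong')
      fix n assume n: "n \<in># Q"
      show "act (L Hh a) (if j + n \<le> -1 then b {#} (add_mset (j+n) Z) (Q - {#n#})
        else if j + n = N then \<phi> (L Hh N) *s b {#} Z (Q - {#n#}) else 0) =
        (if j + n \<le> -1 then b {#} (add_mset (j+n) (add_mset a Z)) (Q - {#n#})
        else if j + n = N then \<phi> (L Hh N) *s b {#} (add_mset a Z) (Q - {#n#}) else 0)"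
        using hE_hf[OF a, of "add_mset (j+n) Z" "Q - {#n#}"] hE_hf[OF a, of Z "Q - {#n#}"] G
        by (auto simp: act_scale inG_diff add_mset_commute)
    qed
    then show ?thesis unfolding D1'_def by simp
  qed
  have D2: "D2 \<in> W ?k" unfolding D2_def using hE_W[OF a R] by (simp add: algebra_simps)
  have D3: "D3 \<in> W ?k"
  proof (cases "j + a \<le> -1")
    case True then show ?thesis unfolding D3_def by (simp add: bE W_zero)
  next
    case False
    then have ja: "j + a \<ge> 0" by simp
    have "act (L Ee (j+a)) ?Y \<in> W (HT {#} Z Q - (j + a))"
      using add.IH[OF ja G] L_bound[OF ja G] by (rule W_lead) simp
    moreover have "HT {#} Z Q - (j + a) \<le> ?k" using N1 by simp
    ultimately have "act (L Ee (j+a)) ?Y \<in> W ?k" using W_mono by blast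
    then show ?thesis unfolding D3_def using False by (simp add: W_scale W_neg)
  qed
  show ?case unfolding eq D1' using D1 D2 D3 by (simp add: W_add)
qed

lemma E: assumes "j \<ge> 0" "inG P Z Q"
  shows "act (L Ee j) (b P Z Q) - (LZ j P Z Q + LQ j P Z Q) \<in> W (HT P Z Q - j - 1)"
  using assms(2)
proof (induction P)
  case empty then show ?case using E0[OF assms(1)] by simp
next
  case (add x P)
  have x: "x \<le> -1" and G: "inG P Z Q" using add by auto
  have ex: "LZ j (add_mset x P) Z Q + LQ j (add_mset x P) Z Q = act (L Ee x) (LZ j P Z Q + LQ j P Z Q)"
    unfolding LZ_def LQ_def act_add act_sum_mset
    by (intro arg_cong2[where f="(+)"] sum_mset_cong') (auto simp: bE act_scale act_neg add_mset_commute)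
  have "act (L Ee j) (b (add_mset x P) Z Q) - (LZ j (add_mset x P) Z Q + LQ j (add_mset x P) Z Q)
     = act (L Ee x) (act (L Ee j) (b P Z Q) - (LZ j P Z Q + LQ j P Z Q))"
    unfolding ex act_diff bE[symmetric] C_ee ..
  also have "\<dots> \<in> W (HT P Z Q - j - 1 + (N - x))" using eE_W[OF x] add.IH G by blast
  finally show ?case by (simp add: algebra_simps)
qed

lemma E_bound: assumes "j \<ge> 0" "inG P Z Q" shows "act (L Ee j) (b P Z Q) \<in> W (HT P Z Q - j)"
  using E[OF assms] L_bound[OF assms] by (rule W_lead) simp

end


context SL begin

lemma E_W: assumes "j \<ge> 0" "u \<in> W k" shows "act (L Ee j) u \<in> W (k + - j)"
  by (rule W_map[OF _ assms(2)]) (use E_bound[OF assms(1)] in simp)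

lemma W_le: "x \<in> W k \<Longrightarrow> k \<le> k' \<Longrightarrow> x \<in> W k'"
  using W_mono by blast

lemma H0: assumes "c \<ge> 0" "inG {#} Z Q"
  shows "act (L Hh c) (b {#} Z Q) - (if c = N then \<phi> (L Hh N) *s b {#} Z Q else 0) \<in> W (HT {#} Z Q + N - c - 1)"
  using assms(2)
proof (induction Z)
  case empty
  show ?case by (rule subsetD[OF Whf_W H_f_lead[OF assms(1) empty]])
next
  case (add a Z)
  let ?Y = "b {#} Z Q"
  have a: "a \<le> -1" and G: "inG {#} Z Q" using add by auto
  have hY: "b {#} (add_mset a Z) Q = act (L Hh a) ?Y" using hE_hf[OF a G] by simp
  define R where "R = act (L Hh c) ?Y - (if c = N then \<phi> (L Hh N) *s ?Y else 0)"
  have R: "R \<in> W (HT {#} Z Q + N - c - 1)" using add.IH G unfolding R_def by simp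
  have eq: "act (L Hh c) (b {#} (add_mset a Z) Q) - (if c = N then \<phi> (L Hh N) *s b {#} (add_mset a Z) Q else 0)
     = act (L Hh a) R + (if c + a = 0 then (of_int c * 2) *s act Kc ?Y else 0)"
    unfolding hY R_def C_hh[of c a] by (simp add: act_diff act_scale)
  have D2: "act (L Hh a) R \<in> W (HT {#} (add_mset a Z) Q + N - c - 1)"
    using hE_W[OF a R] by (simp add: algebra_simps)
  have D4: "(if c + a = 0 then (of_int c * 2) *s act Kc ?Y else 0) \<in> W (HT {#} (add_mset a Z) Q + N - c - 1)"
  proof (cases "c + a = 0")
    case True
    have "?Y \<in> W (HT {#} (add_mset a Z) Q + N - c - 1)" using G True N1 by (intro W_base) auto
    then show ?thesis using True by (simp add: bK W_scale)
  qed (simp add: W_zero)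
  show ?case unfolding eq using D2 D4 by (rule W_add)
qed

lemma H_gen: assumes "c \<ge> 0" "inG P Z Q"
  shows "act (L Hh c) (b P Z Q) - (if c = N then \<phi> (L Hh N) *s b P Z Q else 0) \<in> W (HT P Z Q + N - c - 1)"
  using assms(2)
proof (induction P)
  case empty then show ?case using H0[OF assms(1)] by simp
next
  case (add x P)
  let ?Y = "b P Z Q"
  have x: "x \<le> -1" and G: "inG P Z Q" using add by auto
  define R where "R = act (L Hh c) ?Y - (if c = N then \<phi> (L Hh N) *s ?Y else 0)"
  have R: "R \<in> W (HT P Z Q + N - c - 1)" using add.IH G unfolding R_def by simp
  have eq: "act (L Hh c) (b (add_mset x P) Z Q) - (if c = N then \<phi> (L Hh N) *s b (add_mset x P) Z Q else 0)
     = act (L Ee x) R + 2 *s act (L Ee (c + x)) ?Y"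
    unfolding bE[symmetric] R_def C_he by (simp add: act_diff act_scale)
  have D2: "act (L Ee x) R \<in> W (HT (add_mset x P) Z Q + N - c - 1)"
    using eE_W[OF x R] by (simp add: algebra_simps)
  have D3: "act (L Ee (c + x)) ?Y \<in> W (HT (add_mset x P) Z Q + N - c - 1)"
  proof (cases "c + x \<le> -1")
    case True
    then show ?thesis using G N1 by (simp add: bE) (intro W_base, auto)
  next
    case False
    then show ?thesis using E_bound[of "c+x" P Z Q] G N1 by (auto elim!: W_le)
  qed
  show ?case unfolding eq using D2 D3 by (intro W_add W_scale)
qed

definition LFP :: "int \<Rightarrow> int multiset \<Rightarrow> int multiset \<Rightarrow> int multiset \<Rightarrow> 'v" where
  "LFP n0 P Z Q = (\<Sum>x\<in>#P. if n0 + x \<le> -1 then (-1) *s b (P - {#x#}) (add_mset (n0+x) Z) Q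
      else if n0 + x = N then (- \<phi> (L Hh N)) *s b (P - {#x#}) Z Q else 0)"

definition LFZ :: "int \<Rightarrow> int multiset \<Rightarrow> int multiset \<Rightarrow> int multiset \<Rightarrow> 'v" where
  "LFZ n0 P Z Q = (\<Sum>a\<in>#Z. if n0 + a \<le> N then 2 *s b P (Z - {#a#}) (add_mset (n0+a) Q) else 0)"

lemma LF_bound: assumes "n0 > N" "inG P Z Q"
  shows "LFP n0 P Z Q + LFZ n0 P Z Q \<in> W (HT P Z Q - n0)"
proof (rule W_add)
  show "LFP n0 P Z Q \<in> W (HT P Z Q - n0)" unfolding LFP_def
  proof (rule W_sum)
    fix x assume x: "x \<in># P"
    show "(if n0 + x \<le> -1 then (-1) *s b (P - {#x#}) (add_mset (n0+x) Z) Q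
      else if n0 + x = N then (- \<phi> (L Hh N)) *s b (P - {#x#}) Z Q else 0) \<in> W (HT P Z Q - n0)"
    proof (cases "n0 + x \<le> -1")
      case True
      have "b (P - {#x#}) (add_mset (n0+x) Z) Q \<in> W (HT P Z Q - n0)"
        using x assms HT_diff(1)[OF x, of Z Q] True by (intro W_base) (auto simp: inG_diff)
      then show ?thesis using True by (simp add: W_neg)
    next
      case False
      show ?thesis
      proof (cases "n0 + x = N")
        case True
        have "b (P - {#x#}) Z Q \<in> W (HT P Z Q - n0)"
          using x assms HT_diff(1)[OF x, of Z Q] True by (intro W_base) (auto simp: inG_diff)
        then show ?thesis using False True by (simp add: W_scale W_neg)
      qed (use False in \<open>simp add: W_zero\<close>)
    qed
  qed
  show "LFZ n0 P Z Q \<in> W (HT P Z Q - n0)" unfolding LFZ_def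
  proof (rule W_sum)
    fix a assume a: "a \<in># Z"
    show "(if n0 + a \<le> N then 2 *s b P (Z - {#a#}) (add_mset (n0+a) Q) else 0) \<in> W (HT P Z Q - n0)"
      using a assms HT_diff(2)[OF a, of P Q] by (auto intro!: W_scale W_base simp: W_zero inG_diff)
  qed
qed

end


context SL begin

lemma F0: assumes "n0 > N" "inG {#} Z Q"
  shows "act (L Ff n0) (b {#} Z Q) - LFZ n0 {#} Z Q \<in> W (HT {#} Z Q - n0 - 1)"
  using assms
proof (induction Z arbitrary: n0)
  case empty
  then show ?case using F_kill[of n0 Q] by (simp add: LFZ_def W_zero)
next
  case (add a Z)
  let ?Y = "b {#} Z Q"
  let ?k = "HT {#} (add_mset a Z) Q - n0 - 1"
  have a: "a \<le> -1" and G: "inG {#} Z Q" and n0: "n0 > N" using add by auto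
  have hY: "b {#} (add_mset a Z) Q = act (L Hh a) ?Y" using hE_hf[OF a G] by simp
  define R where "R = act (L Ff n0) ?Y - LFZ n0 {#} Z Q"
  have R: "R \<in> W (HT {#} Z Q - n0 - 1)" using add.IH[OF n0 G] unfolding R_def .
  let ?Ta = "if n0 + a \<le> N then 2 *s b {#} Z (add_mset (n0+a) Q) else 0"
  let ?S = "(\<Sum>a'\<in>#Z. if n0 + a' \<le> N then 2 *s b {#} (add_mset a Z - {#a'#}) (add_mset (n0+a') Q) else 0)"
  have LZa: "LFZ n0 {#} (add_mset a Z) Q = ?Ta + ?S" unfolding LFZ_def by simp
  have D1: "act (L Hh a) (LFZ n0 {#} Z Q) = ?S"
    unfolding LFZ_def act_sum_mset
  proof (rule sum_mset_cong')
    fix a' assume a': "a' \<in># Z"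
    show "act (L Hh a) (if n0 + a' \<le> N then 2 *s b {#} (Z - {#a'#}) (add_mset (n0+a') Q) else 0)
      = (if n0 + a' \<le> N then 2 *s b {#} (add_mset a Z - {#a'#}) (add_mset (n0+a') Q) else 0)"
      using hE_hf[OF a, of "Z - {#a'#}" "add_mset (n0+a') Q"] G a'
      by (auto simp: act_scale inG_diff add_diff_in)
  qed
  define D2 where "D2 = act (L Hh a) R"
  define D3 where "D3 = 2 *s act (L Ff (n0+a)) ?Y - ?Ta"
  have eq: "act (L Ff n0) (b {#} (add_mset a Z) Q) - LFZ n0 {#} (add_mset a Z) Q = D2 + D3"
    unfolding D2_def D3_def R_def LZa hY C_fh act_diff D1 by (simp add: algebra_simps)
  have D2: "D2 \<in> W ?k" unfolding D2_def using hE_W[OF a R] by (simp add: algebra_simps)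
  have D3: "D3 \<in> W ?k"
  proof (cases "n0 + a \<le> N")
    case True
    have "act (L Ff (n0+a)) ?Y - b {#} Z (add_mset (n0+a) Q) \<in> W (HT {#} Z Q - (n0 + a))"
      using F_hf[OF True G] Whf_W by blast
    then have "act (L Ff (n0+a)) ?Y - b {#} Z (add_mset (n0+a) Q) \<in> W ?k"
      by (rule W_le) (use N1 in simp)
    then have "2 *s (act (L Ff (n0+a)) ?Y - b {#} Z (add_mset (n0+a) Q)) \<in> W ?k" by (rule W_scale)
    then show ?thesis unfolding D3_def using True by (simp add: scale_right_diff_distrib)
  next
    case False
    then have na: "n0 + a > N" by simp
    have "act (L Ff (n0+a)) ?Y \<in> W (HT {#} Z Q - (n0 + a))"
    proof (rule W_lead[OF add.IH[OF na G]])
      show "LFZ (n0 + a) {#} Z Q \<in> W (HT {#} Z Q - (n0 + a))" using LF_bound[OF na G] by (simp add: LFP_def)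
    qed simp
    then have "act (L Ff (n0+a)) ?Y \<in> W ?k" by (rule W_le) (use N1 in simp)
    then show ?thesis unfolding D3_def using False by (simp add: W_scale)
  qed
  show ?case unfolding eq using D2 D3 by (rule W_add)
qed

lemma Fm: assumes "n0 > N" "inG P Z Q"
  shows "act (L Ff n0) (b P Z Q) - (LFP n0 P Z Q + LFZ n0 P Z Q) \<in> W (HT P Z Q - n0 - 1)"
  using assms(2)
proof (induction P)
  case empty then show ?case using F0[OF assms(1)] by (simp add: LFP_def)
next
  case (add x P)
  let ?Y = "b P Z Q"
  let ?k = "HT (add_mset x P) Z Q - n0 - 1"
  let ?c = "n0 + x"
  have x: "x \<le> -1" and G: "inG P Z Q" using add by auto
  define R where "R = act (L Ff n0) ?Y - (LFP n0 P Z Q + LFZ n0 P Z Q)"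
  have R: "R \<in> W (HT P Z Q - n0 - 1)" using add.IH G unfolding R_def by simp
  let ?Tx = "if ?c \<le> -1 then (-1) *s b P (add_mset ?c Z) Q
      else if ?c = N then (- \<phi> (L Hh N)) *s b P Z Q else 0"
  let ?S = "(\<Sum>x'\<in>#P. if n0 + x' \<le> -1 then (-1) *s b (add_mset x P - {#x'#}) (add_mset (n0+x') Z) Q
      else if n0 + x' = N then (- \<phi> (L Hh N)) *s b (add_mset x P - {#x'#}) Z Q else 0)"
  have LPa: "LFP n0 (add_mset x P) Z Q = ?Tx + ?S" unfolding LFP_def by simp
  have E1: "act (L Ee x) (LFP n0 P Z Q) = ?S"
    unfolding LFP_def act_sum_mset
  proof (rule sum_mset_cong')
    fix x' assume x': "x' \<in># P"
    show "act (L Ee x) (if n0 + x' \<le> -1 then (-1) *s b (P - {#x'#}) (add_mset (n0+x') Z) Q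
      else if n0 + x' = N then (- \<phi> (L Hh N)) *s b (P - {#x'#}) Z Q else 0) =
      (if n0 + x' \<le> -1 then (-1) *s b (add_mset x P - {#x'#}) (add_mset (n0+x') Z) Q
      else if n0 + x' = N then (- \<phi> (L Hh N)) *s b (add_mset x P - {#x'#}) Z Q else 0)"
      using x' by (simp add: act_scale act_neg bE add_diff_in)
  qed
  have E2: "act (L Ee x) (LFZ n0 P Z Q) = LFZ n0 (add_mset x P) Z Q"
    unfolding LFZ_def act_sum_mset by (rule sum_mset_cong') (simp add: act_scale bE)
  define D2 where "D2 = act (L Ee x) R"
  define D3 where "D3 = (-1) *s act (L Hh ?c) ?Y - ?Tx"
  define D4 where "D4 = (if n0 + x = 0 then of_int n0 *s act Kc ?Y else 0)"
  have eq: "act (L Ff n0) (b (add_mset x P) Z Q) - (LFP n0 (add_mset x P) Z Q + LFZ n0 (add_mset x P) Z Q)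
      = D2 + D3 + D4"
    unfolding D2_def D3_def D4_def R_def LPa bE[symmetric] C_fe act_diff act_add E1 E2[symmetric]
    by (simp add: algebra_simps)
  have D2: "D2 \<in> W ?k" unfolding D2_def using eE_W[OF x R] by (simp add: algebra_simps)
  have D3: "D3 \<in> W ?k"
  proof (cases "?c \<le> -1")
    case True
    have "act (L Hh ?c) ?Y - b P (add_mset ?c Z) Q \<in> W (HT P Z Q - ?c)" by (rule hE_bound[OF True G])
    then have "act (L Hh ?c) ?Y - b P (add_mset ?c Z) Q \<in> W ?k" by (rule W_le) (use N1 in simp)
    then have "(-1) *s (act (L Hh ?c) ?Y - b P (add_mset ?c Z) Q) \<in> W ?k" by (rule W_scale)
    then show ?thesis unfolding D3_def using True by (simp only: if_True scale_right_diff_distrib)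
  next
    case False
    then have c0: "?c \<ge> 0" by simp
    have "act (L Hh ?c) ?Y - (if ?c = N then \<phi> (L Hh N) *s ?Y else 0) \<in> W (HT P Z Q + N - ?c - 1)"
      by (rule H_gen[OF c0 G])
    then have "(-1) *s (act (L Hh ?c) ?Y - (if ?c = N then \<phi> (L Hh N) *s ?Y else 0)) \<in> W ?k"
      by (intro W_scale) (simp add: algebra_simps)
    moreover have "(-1) *s (act (L Hh ?c) ?Y - (if ?c = N then \<phi> (L Hh N) *s ?Y else 0)) = D3"
      unfolding D3_def using False by (cases "?c = N") (simp_all add: scale_right_diff_distrib)
    ultimately show ?thesis by simp
  qed
  have D4: "D4 \<in> W ?k"
  proof (cases "n0 + x = 0")
    case True
    have "?Y \<in> W ?k" using G True N1 by (intro W_base) auto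
    then show ?thesis unfolding D4_def using True by (simp add: bK W_scale)
  qed (simp add: D4_def W_zero)
  show ?case unfolding eq using D2 D3 D4 by (intro W_add)
qed

end


context SL begin

definition Bs :: "'v set" where "Bs = {b P Z Q | P Z Q. inG P Z Q}"

lemma Xact_b: assumes "(p, z, q) \<in> Gamma (-1) N"
  shows "Xact act (p, z, q) v = b (mset p) (mset z) (mset q)"
  using assms by (simp add: Xact_def Xlist_def b_def Gamma_def Gamma_m_def sorted_sort_id)

lemma Gamma_inG: assumes "(p, z, q) \<in> Gamma (-1) N" shows "inG (mset p) (mset z) (mset q)"
  using assms by (auto simp: inG_def Gamma_def Gamma_m_def)

lemma inG_Gamma: assumes "inG P Z Q"
  shows "(sorted_list_of_multiset P, sorted_list_of_multiset Z, sorted_list_of_multiset Q) \<in> Gamma (-1) N"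
  using assms by (auto simp: inG_def Gamma_def Gamma_m_def)

lemma image_Bs: "(\<lambda>\<gamma>. Xact act \<gamma> v) ` Gamma (-1) N = Bs"
proof
  show "(\<lambda>\<gamma>. Xact act \<gamma> v) ` Gamma (-1) N \<subseteq> Bs"
  proof
    fix x assume "x \<in> (\<lambda>\<gamma>. Xact act \<gamma> v) ` Gamma (-1) N"
    then obtain p z q where "(p,z,q) \<in> Gamma (-1) N" "x = Xact act (p,z,q) v" by auto
    then show "x \<in> Bs" unfolding Bs_def using Xact_b Gamma_inG by blast
  qed
  show "Bs \<subseteq> (\<lambda>\<gamma>. Xact act \<gamma> v) ` Gamma (-1) N"
  proof
    fix x assume "x \<in> Bs"
    then obtain P Z Q where x: "x = b P Z Q" "inG P Z Q" unfolding Bs_def by auto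
    have g: "(sorted_list_of_multiset P, sorted_list_of_multiset Z, sorted_list_of_multiset Q) \<in> Gamma (-1) N"
      using inG_Gamma[OF x(2)] .
    have "x = Xact act (sorted_list_of_multiset P, sorted_list_of_multiset Z, sorted_list_of_multiset Q) v"
      using Xact_b[OF g] x by simp
    then show "x \<in> (\<lambda>\<gamma>. Xact act \<gamma> v) ` Gamma (-1) N" using g by blast
  qed
qed

lemma indep: "independent Bs"
  using IM image_Bs unfolding induced_module_def by metis
lemma spanBs: "span Bs = UNIV"
  using IM image_Bs unfolding induced_module_def by metis
lemma injX: "inj_on (\<lambda>\<gamma>. Xact act \<gamma> v) (Gamma (-1) N)"
  using IM unfolding induced_module_def by blast

lemma b_inj: assumes "inG P Z Q" "inG P' Z' Q'" "b P Z Q = b P' Z' Q'"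
  shows "P = P' \<and> Z = Z' \<and> Q = Q'"
proof -
  let ?g = "(sorted_list_of_multiset P, sorted_list_of_multiset Z, sorted_list_of_multiset Q)"
  let ?g' = "(sorted_list_of_multiset P', sorted_list_of_multiset Z', sorted_list_of_multiset Q')"
  have g: "?g \<in> Gamma (-1) N" "?g' \<in> Gamma (-1) N" using inG_Gamma assms by auto
  have "Xact act ?g v = Xact act ?g' v" using Xact_b[OF g(1)] Xact_b[OF g(2)] assms(3) by simp
  then have "?g = ?g'" using injX g by (auto dest: inj_onD)
  then have "mset (sorted_list_of_multiset P) = mset (sorted_list_of_multiset P')"
     "mset (sorted_list_of_multiset Z) = mset (sorted_list_of_multiset Z')"
     "mset (sorted_list_of_multiset Q) = mset (sorted_list_of_multiset Q')" by auto
  then show ?thesis by simp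
qed

definition coef :: "int multiset \<Rightarrow> int multiset \<Rightarrow> int multiset \<Rightarrow> 'v \<Rightarrow> complex" where
  "coef P Z Q u = representation Bs u (b P Z Q)"

lemma coef_add: "coef P Z Q (x + y) = coef P Z Q x + coef P Z Q y"
  unfolding coef_def using representation_add[OF indep, of y x] spanBs by simp
lemma coef_scale: "coef P Z Q (c *s x) = c * coef P Z Q x"
  unfolding coef_def using representation_scale[OF indep, of x c] spanBs by simp
lemma coef_diff: "coef P Z Q (x - y) = coef P Z Q x - coef P Z Q y"
  unfolding coef_def using representation_diff[OF indep, of y x] spanBs by simp
lemma coef_neg: "coef P Z Q (- x) = - coef P Z Q x"
  unfolding coef_def using representation_neg[OF indep, of x] spanBs by simp
lemma coef_zero: "coef P Z Q 0 = 0"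
  unfolding coef_def using representation_zero by simp
lemma coef_sum_mset: "coef P Z Q (\<Sum>x\<in>#M. f x) = (\<Sum>x\<in>#M. coef P Z Q (f x))"
  by (induction M) (auto simp: coef_add coef_zero)
lemma coef_sum: "coef P Z Q (\<Sum>x\<in>A. f x) = (\<Sum>x\<in>A. coef P Z Q (f x))"
  by (induction A rule: infinite_finite_induct) (auto simp: coef_add coef_zero)

lemma coef_b: assumes "inG P Z Q" "inG P' Z' Q'"
  shows "coef P Z Q (b P' Z' Q') = (if P' = P \<and> Z' = Z \<and> Q' = Q then 1 else 0)"
proof -
  have "b P' Z' Q' \<in> Bs" using assms(2) unfolding Bs_def by blast
  then have "coef P Z Q (b P' Z' Q') = (if b P Z Q = b P' Z' Q' then 1 else 0)"
    unfolding coef_def using representation_basis[OF indep] by simp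
  then show ?thesis using b_inj[OF assms] by auto
qed

lemma coef_W: assumes "inG P Z Q" "u \<in> W k" "k < HT P Z Q"
  shows "coef P Z Q u = 0"
  using assms(2) unfolding W_def
proof (induction rule: span_induct_alt)
  case base then show ?case by (rule coef_zero)
next
  case (step c x y)
  then obtain P' Z' Q' where x: "x = b P' Z' Q'" "inG P' Z' Q'" "HT P' Z' Q' \<le> k" by blast
  have "coef P Z Q x = 0" using coef_b[OF assms(1) x(2)] x assms(3) by auto
  then show ?case using step by (simp add: coef_add coef_scale)
qed

end


context SL begin

lemma coef_LZ: assumes "inG PT ZT QT" "inG P Z Q"
  shows "coef PT ZT QT (LZ j P Z Q) = (\<Sum>a\<in>#Z. if j + a \<le> -1 \<and> add_mset (j+a) P = PT \<and> Z - {#a#} = ZT \<and> Q = QT then -2 else 0)"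
  unfolding LZ_def coef_sum_mset
proof (rule sum_mset_cong')
  fix a assume a: "a \<in># Z"
  show "coef PT ZT QT (if j + a \<le> -1 then (-2) *s b (add_mset (j+a) P) (Z - {#a#}) Q else 0)
    = (if j + a \<le> -1 \<and> add_mset (j+a) P = PT \<and> Z - {#a#} = ZT \<and> Q = QT then -2 else 0)"
    using coef_b[OF assms(1), of "add_mset (j+a) P" "Z - {#a#}" Q] assms(2) a
    by (auto simp: coef_scale coef_zero coef_neg inG_diff)
qed

lemma coef_LQ: assumes "inG PT ZT QT" "inG P Z Q"
  shows "coef PT ZT QT (LQ j P Z Q) = (\<Sum>n\<in>#Q. if j + n \<le> -1 then (if P = PT \<and> add_mset (j+n) Z = ZT \<and> Q - {#n#} = QT then 1 else 0)
     else if j + n = N then (if P = PT \<and> Z = ZT \<and> Q - {#n#} = QT then \<phi> (L Hh N) else 0) else 0)"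
  unfolding LQ_def coef_sum_mset
proof (rule sum_mset_cong')
  fix n assume n: "n \<in># Q"
  show "coef PT ZT QT (if j + n \<le> -1 then b P (add_mset (j+n) Z) (Q - {#n#})
        else if j + n = N then \<phi> (L Hh N) *s b P Z (Q - {#n#}) else 0) =
     (if j + n \<le> -1 then (if P = PT \<and> add_mset (j+n) Z = ZT \<and> Q - {#n#} = QT then 1 else 0)
     else if j + n = N then (if P = PT \<and> Z = ZT \<and> Q - {#n#} = QT then \<phi> (L Hh N) else 0) else 0)"
    using coef_b[OF assms(1), of P "add_mset (j+n) Z" "Q - {#n#}"] coef_b[OF assms(1), of P Z "Q - {#n#}"] assms(2) n
    by (auto simp: coef_scale coef_zero inG_diff)
qed

lemma coef_LFP: assumes "inG PT ZT QT" "inG P Z Q"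
  shows "coef PT ZT QT (LFP n0 P Z Q) = (\<Sum>x\<in>#P. if n0 + x \<le> -1 then (if P - {#x#} = PT \<and> add_mset (n0+x) Z = ZT \<and> Q = QT then -1 else 0)
     else if n0 + x = N then (if P - {#x#} = PT \<and> Z = ZT \<and> Q = QT then - \<phi> (L Hh N) else 0) else 0)"
  unfolding LFP_def coef_sum_mset
proof (rule sum_mset_cong')
  fix x assume x: "x \<in># P"
  show "coef PT ZT QT (if n0 + x \<le> -1 then (-1) *s b (P - {#x#}) (add_mset (n0+x) Z) Q
      else if n0 + x = N then (- \<phi> (L Hh N)) *s b (P - {#x#}) Z Q else 0) =
     (if n0 + x \<le> -1 then (if P - {#x#} = PT \<and> add_mset (n0+x) Z = ZT \<and> Q = QT then -1 else 0)
     else if n0 + x = N then (if P - {#x#} = PT \<and> Z = ZT \<and> Q = QT then - \<phi> (L Hh N) else 0) else 0)"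
    using coef_b[OF assms(1), of "P - {#x#}" "add_mset (n0+x) Z" Q] coef_b[OF assms(1), of "P - {#x#}" Z Q] assms(2) x
    by (auto simp: coef_scale coef_zero coef_neg inG_diff)
qed

lemma coef_LFZ: assumes "inG PT ZT QT" "inG P Z Q"
  shows "coef PT ZT QT (LFZ n0 P Z Q) = (\<Sum>a\<in>#Z. if n0 + a \<le> N \<and> P = PT \<and> Z - {#a#} = ZT \<and> add_mset (n0+a) Q = QT then 2 else 0)"
  unfolding LFZ_def coef_sum_mset
proof (rule sum_mset_cong')
  fix a assume a: "a \<in># Z"
  show "coef PT ZT QT (if n0 + a \<le> N then 2 *s b P (Z - {#a#}) (add_mset (n0+a) Q) else 0)
    = (if n0 + a \<le> N \<and> P = PT \<and> Z - {#a#} = ZT \<and> add_mset (n0+a) Q = QT then 2 else 0)"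
    using coef_b[OF assms(1), of P "Z - {#a#}" "add_mset (n0+a) Q"] assms(2) a
    by (auto simp: coef_scale coef_zero inG_diff)
qed

lemma coef_top_e: assumes "j \<ge> 0" "inG P Z Q" "inG PT ZT QT" "HT P Z Q \<le> H" "HT PT ZT QT = H - j"
  shows "coef PT ZT QT (act (L Ee j) (b P Z Q)) = (if HT P Z Q = H then coef PT ZT QT (LZ j P Z Q + LQ j P Z Q) else 0)"
proof -
  have "coef PT ZT QT (act (L Ee j) (b P Z Q) - (LZ j P Z Q + LQ j P Z Q)) = 0"
    by (rule coef_W[OF assms(3) E[OF assms(1,2)]]) (use assms in simp)
  then have e: "coef PT ZT QT (act (L Ee j) (b P Z Q)) = coef PT ZT QT (LZ j P Z Q + LQ j P Z Q)"
    by (simp add: coef_diff)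
  show ?thesis
  proof (cases "HT P Z Q = H")
    case False
    have "coef PT ZT QT (LZ j P Z Q + LQ j P Z Q) = 0"
      by (rule coef_W[OF assms(3) L_bound[OF assms(1,2)]]) (use assms False in simp)
    then show ?thesis using e False by simp
  qed (use e in simp)
qed

lemma coef_top_f: assumes "n0 > N" "inG P Z Q" "inG PT ZT QT" "HT P Z Q \<le> H" "HT PT ZT QT = H - n0"
  shows "coef PT ZT QT (act (L Ff n0) (b P Z Q)) = (if HT P Z Q = H then coef PT ZT QT (LFP n0 P Z Q + LFZ n0 P Z Q) else 0)"
proof -
  have "coef PT ZT QT (act (L Ff n0) (b P Z Q) - (LFP n0 P Z Q + LFZ n0 P Z Q)) = 0"
    by (rule coef_W[OF assms(3) Fm[OF assms(1,2)]]) (use assms in simp)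
  then have e: "coef PT ZT QT (act (L Ff n0) (b P Z Q)) = coef PT ZT QT (LFP n0 P Z Q + LFZ n0 P Z Q)"
    by (simp add: coef_diff)
  show ?thesis
  proof (cases "HT P Z Q = H")
    case False
    have "coef PT ZT QT (LFP n0 P Z Q + LFZ n0 P Z Q) = 0"
      by (rule coef_W[OF assms(3) LF_bound[OF assms(1,2)]]) (use assms False in simp)
    then show ?thesis using e False by simp
  qed (use e in simp)
qed

end


lemma sum_mset_zero: "(\<And>x. x \<in># M \<Longrightarrow> f x = 0) \<Longrightarrow> (\<Sum>x\<in>#M. f x) = (0::'a::comm_monoid_add)"
  by (induction M) auto

lemma sum_mset_delta: "(\<Sum>x\<in>#M. if x = y then c else 0) = of_nat (count M y) * (c :: complex)"
  by (induction M) (auto simp: algebra_simps)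

lemma sorted_mset_eq: "sorted xs \<Longrightarrow> sorted ys \<Longrightarrow> mset xs = mset ys \<Longrightarrow> xs = ys"
  by (metis sorted_list_of_multiset_mset sorted_sort_id)

definition mP :: "triple \<Rightarrow> int multiset" where "mP g = mset (fst g)"
definition mZ :: "triple \<Rightarrow> int multiset" where "mZ g = mset (fst (snd g))"
definition mQ :: "triple \<Rightarrow> int multiset" where "mQ g = mset (snd (snd g))"

lemma sum_mset_Nminus: "(\<Sum>x\<in>#mset xs. (N::int) - x) = int (length xs) * N - sum_list xs"
  by (induction xs) (auto simp: algebra_simps)

lemma glen_m: "glen g = size (mP g) + size (mZ g) + size (mQ g)"
  by (simp add: glen_def mP_def mZ_def mQ_def)

lemma mt_inj: assumes "g \<in> Gamma (-1) N" "g' \<in> Gamma (-1) N" "mP g = mP g'" "mZ g = mZ g'" "mQ g = mQ g'"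
  shows "g = g'"
  using assms by (cases g; cases g') (auto simp: Gamma_def Gamma_m_def mP_def mZ_def mQ_def intro: sorted_mset_eq)

locale SW = SL +
  fixes a :: "triple \<Rightarrow> complex" and w and H :: int and l :: nat
  assumes fin: "finite {g. a g \<noteq> 0}"
    and supp: "{g. a g \<noteq> 0} \<subseteq> Gamma (-1) N"
    and wdef: "w = (\<Sum>g\<in>{g. a g \<noteq> 0}. a g *s Xact act g v)"
    and Ew: "\<And>j. j \<ge> 0 \<Longrightarrow> act (L Ee j) w = 0"
    and Fw: "\<And>n. n > N \<Longrightarrow> act (L Ff n) w = 0"
    and Hdef: "H = Max (gHt N ` {g. a g \<noteq> 0})"
    and ldef: "l = Min (glen ` {g. a g \<noteq> 0 \<and> gHt N g = H})"
    and hN: "\<phi> (L Hh N) \<noteq> 0"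
begin

abbreviation "S \<equiv> {g. a g \<noteq> 0}"

lemma bg: "g \<in> Gamma (-1) N \<Longrightarrow> Xact act g v = b (mP g) (mZ g) (mQ g)"
  by (cases g) (simp add: Xact_b mP_def mZ_def mQ_def)

lemma inGg: "g \<in> Gamma (-1) N \<Longrightarrow> inG (mP g) (mZ g) (mQ g)"
  by (cases g) (simp add: Gamma_inG mP_def mZ_def mQ_def)

lemma HTg: "HT (mP g) (mZ g) (mQ g) = gHt N g"
  by (simp add: HT_def mP_def mZ_def mQ_def gHt_def glen_def ght_def sum_mset_Nminus algebra_simps)

lemma HT_le: "g \<in> S \<Longrightarrow> gHt N g \<le> H"
  unfolding Hdef using fin by (intro Max_ge) auto

lemma len_ge: "g \<in> S \<Longrightarrow> gHt N g = H \<Longrightarrow> l \<le> glen g"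
  unfolding ldef using fin by (intro Min_le) auto

lemma coef_act: "coef PT ZT QT (act gg w) = (\<Sum>g\<in>S. a g * coef PT ZT QT (act gg (b (mP g) (mZ g) (mQ g))))"
proof -
  have "act gg w = (\<Sum>g\<in>S. a g *s act gg (b (mP g) (mZ g) (mQ g)))"
    unfolding wdef act_sum act_scale using supp by (intro sum.cong) (auto simp: bg)
  then show ?thesis by (simp add: coef_sum coef_scale)
qed

end


lemma sz1: "x \<in># M \<Longrightarrow> size (M - {#x#}) + 1 = size M"
  by (metis Suc_eq_plus1 insert_DiffM size_add_mset)

lemma diff_eq_same: "n \<in># Q \<Longrightarrow> n \<in># Q0 \<Longrightarrow> Q - {#n#} = Q0 - {#n#} \<Longrightarrow> Q = Q0"
  by (metis insert_DiffM)

context SW begin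

lemma part1_q: assumes g0: "g0 \<in> S" "gHt N g0 = H" "glen g0 = l" shows "snd (snd g0) = []"
proof (rule ccontr)
  assume ne: "snd (snd g0) \<noteq> []"
  define P0 where "P0 = mP g0"
  define Z0 where "Z0 = mZ g0"
  define Q0 where "Q0 = mQ g0"
  obtain n where n: "n \<in># Q0" using ne unfolding Q0_def mQ_def by (cases "snd (snd g0)") auto
  have g0G: "g0 \<in> Gamma (-1) N" using g0 supp by auto
  have G0: "inG P0 Z0 Q0" unfolding P0_def Z0_def Q0_def by (rule inGg[OF g0G])
  have nN: "n \<le> N" using G0 n by (auto simp: inG_def)
  define j where "j = N - n"
  have j0: "j \<ge> 0" using nN unfolding j_def by simp
  have GT: "inG P0 Z0 (Q0 - {#n#})" using G0 by (rule inG_diff)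
  have HT0: "HT P0 Z0 Q0 = H" using g0 HTg unfolding P0_def Z0_def Q0_def by simp
  have HTT: "HT P0 Z0 (Q0 - {#n#}) = H - j" using HT_diff(3)[OF n, of P0 Z0] HT0 unfolding j_def by simp
  have l0: "l = size P0 + size Z0 + size Q0" using g0(3) glen_m unfolding P0_def Z0_def Q0_def by simp
  have szQ: "size (Q0 - {#n#}) + 1 = size Q0" using sz1[OF n] .
  have key: "a g * coef P0 Z0 (Q0 - {#n#}) (act (L Ee j) (b (mP g) (mZ g) (mQ g)))
      = (if g = g0 then a g0 * (of_nat (count Q0 n) * \<phi> (L Hh N)) else 0)" if gS: "g \<in> S" for g
  proof -
    define P where "P = mP g"
    define Z where "Z = mZ g"
    define Q where "Q = mQ g"
    have gG: "g \<in> Gamma (-1) N" using gS supp by auto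
    have G: "inG P Z Q" unfolding P_def Z_def Q_def by (rule inGg[OF gG])
    have HTle: "HT P Z Q \<le> H" using HT_le[OF gS] HTg unfolding P_def Z_def Q_def by simp
    have ct: "coef P0 Z0 (Q0 - {#n#}) (act (L Ee j) (b P Z Q)) =
       (if HT P Z Q = H then coef P0 Z0 (Q0 - {#n#}) (LZ j P Z Q + LQ j P Z Q) else 0)"
      by (rule coef_top_e[OF j0 G GT HTle HTT])
    show ?thesis
    proof (cases "HT P Z Q = H")
      case False
      then have "g \<noteq> g0" using HT0 unfolding P_def Z_def Q_def P0_def Z0_def Q0_def by auto
      then show ?thesis using ct False unfolding P_def Z_def Q_def by simp
    next
      case True
      have lsz: "l \<le> size P + size Z + size Q"
        using len_ge[OF gS] True HTg glen_m unfolding P_def Z_def Q_def by simp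
      have cz: "coef P0 Z0 (Q0 - {#n#}) (LZ j P Z Q) = 0"
        unfolding coef_LZ[OF GT G]
      proof (rule sum_mset_zero)
        fix x assume x: "x \<in># Z"
        show "(if j + x \<le> -1 \<and> add_mset (j+x) P = P0 \<and> Z - {#x#} = Z0 \<and> Q = Q0 - {#n#} then -2 else 0) = (0::complex)"
        proof (rule ccontr)
          assume "(if j + x \<le> -1 \<and> add_mset (j+x) P = P0 \<and> Z - {#x#} = Z0 \<and> Q = Q0 - {#n#} then -2 else 0) \<noteq> (0::complex)"
          then have c: "add_mset (j+x) P = P0" "Z - {#x#} = Z0" "Q = Q0 - {#n#}" by (auto split: if_splits)
          have "size P0 = size P + 1" "size Z0 + 1 = size Z" using c sz1[OF x] by auto
          then show False using lsz l0 szQ c(3) by simp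
        qed
      qed
      have cq: "coef P0 Z0 (Q0 - {#n#}) (LQ j P Z Q) = (if g = g0 then of_nat (count Q0 n) * \<phi> (L Hh N) else 0)"
      proof (cases "g = g0")
        case True
        then have e: "P = P0" "Z = Z0" "Q = Q0" unfolding P_def Z_def Q_def P0_def Z0_def Q0_def by auto
        have "coef P0 Z0 (Q0 - {#n#}) (LQ j P Z Q) = (\<Sum>x\<in>#Q0. if x = n then \<phi> (L Hh N) else 0)"
          unfolding e coef_LQ[OF GT G0]
        proof (rule sum_mset_cong')
          fix x assume x: "x \<in># Q0"
          show "(if j + x \<le> -1 then (if P0 = P0 \<and> add_mset (j+x) Z0 = Z0 \<and> Q0 - {#x#} = Q0 - {#n#} then 1 else 0)
            else if j + x = N then (if P0 = P0 \<and> Z0 = Z0 \<and> Q0 - {#x#} = Q0 - {#n#} then \<phi> (L Hh N) else 0) else 0)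
            = (if x = n then \<phi> (L Hh N) else 0)"
            using N1 unfolding j_def by auto
        qed
        then show ?thesis using True by (simp add: sum_mset_delta)
      next
        case False
        have "coef P0 Z0 (Q0 - {#n#}) (LQ j P Z Q) = 0"
          unfolding coef_LQ[OF GT G]
        proof (rule sum_mset_zero)
          fix x assume x: "x \<in># Q"
          show "(if j + x \<le> -1 then (if P = P0 \<and> add_mset (j+x) Z = Z0 \<and> Q - {#x#} = Q0 - {#n#} then 1 else 0)
            else if j + x = N then (if P = P0 \<and> Z = Z0 \<and> Q - {#x#} = Q0 - {#n#} then \<phi> (L Hh N) else 0) else 0) = 0"
          proof (cases "j + x \<le> -1")
            case True
            have "\<not> (P = P0 \<and> add_mset (j+x) Z = Z0 \<and> Q - {#x#} = Q0 - {#n#})"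
            proof
              assume c: "P = P0 \<and> add_mset (j+x) Z = Z0 \<and> Q - {#x#} = Q0 - {#n#}"
              have "size Z + 1 = size Z0" "size (Q - {#x#}) + 1 = size Q" using c sz1[OF x] by auto
              then show False using lsz l0 szQ c by simp
            qed
            then show ?thesis using True by simp
          next
            case nT: False
            have "\<not> (j + x = N \<and> P = P0 \<and> Z = Z0 \<and> Q - {#x#} = Q0 - {#n#})"
            proof
              assume c: "j + x = N \<and> P = P0 \<and> Z = Z0 \<and> Q - {#x#} = Q0 - {#n#}"
              then have "x = n" unfolding j_def by simp
              then have "Q = Q0" using c diff_eq_same[OF x] n by auto
              then have "g = g0" using c mt_inj[OF gG g0G] unfolding P_def Z_def Q_def P0_def Z0_def Q0_def by auto
              then show False using False by simp
            qed
            then show ?thesis using nT by auto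
          qed
        qed
        then show ?thesis using False by simp
      qed
      show ?thesis using ct True cz cq unfolding P_def Z_def Q_def by (auto simp: coef_add)
    qed
  qed
  have "0 = coef P0 Z0 (Q0 - {#n#}) (act (L Ee j) w)" using Ew[OF j0] by (simp add: coef_zero)
  also have "\<dots> = (\<Sum>g\<in>S. if g = g0 then a g0 * (of_nat (count Q0 n) * \<phi> (L Hh N)) else 0)"
    unfolding coef_act using key by (intro sum.cong) auto
  also have "\<dots> = a g0 * (of_nat (count Q0 n) * \<phi> (L Hh N))" using fin g0 by simp
  finally show False using g0 hN n by (simp add: count_eq_zero_iff)
qed


lemma part1_p: assumes g0: "g0 \<in> S" "gHt N g0 = H" "glen g0 = l" shows "fst g0 = []"
proof (rule ccontr)
  assume ne: "fst g0 \<noteq> []"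
  define P0 where "P0 = mP g0"
  define Z0 where "Z0 = mZ g0"
  define Q0 where "Q0 = mQ g0"
  obtain x where x: "x \<in># P0" using ne unfolding P0_def mP_def by (cases "fst g0") auto
  have g0G: "g0 \<in> Gamma (-1) N" using g0 supp by auto
  have G0: "inG P0 Z0 Q0" unfolding P0_def Z0_def Q0_def by (rule inGg[OF g0G])
  have xN: "x \<le> -1" using G0 x by (auto simp: inG_def)
  define n0 where "n0 = N - x"
  have n0: "n0 > N" using xN unfolding n0_def by simp
  have GT: "inG (P0 - {#x#}) Z0 Q0" using G0 by (rule inG_diff)
  have HT0: "HT P0 Z0 Q0 = H" using g0 HTg unfolding P0_def Z0_def Q0_def by simp
  have HTT: "HT (P0 - {#x#}) Z0 Q0 = H - n0" using HT_diff(1)[OF x, of Z0 Q0] HT0 unfolding n0_def by simp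
  have l0: "l = size P0 + size Z0 + size Q0" using g0(3) glen_m unfolding P0_def Z0_def Q0_def by simp
  have szP: "size (P0 - {#x#}) + 1 = size P0" using sz1[OF x] .
  have key: "a g * coef (P0 - {#x#}) Z0 Q0 (act (L Ff n0) (b (mP g) (mZ g) (mQ g)))
      = (if g = g0 then a g0 * (of_nat (count P0 x) * (- \<phi> (L Hh N))) else 0)" if gS: "g \<in> S" for g
  proof -
    define P where "P = mP g"
    define Z where "Z = mZ g"
    define Q where "Q = mQ g"
    have gG: "g \<in> Gamma (-1) N" using gS supp by auto
    have G: "inG P Z Q" unfolding P_def Z_def Q_def by (rule inGg[OF gG])
    have HTle: "HT P Z Q \<le> H" using HT_le[OF gS] HTg unfolding P_def Z_def Q_def by simp
    have ct: "coef (P0 - {#x#}) Z0 Q0 (act (L Ff n0) (b P Z Q)) =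
       (if HT P Z Q = H then coef (P0 - {#x#}) Z0 Q0 (LFP n0 P Z Q + LFZ n0 P Z Q) else 0)"
      by (rule coef_top_f[OF n0 G GT HTle HTT])
    show ?thesis
    proof (cases "HT P Z Q = H")
      case False
      then have "g \<noteq> g0" using HT0 unfolding P_def Z_def Q_def P0_def Z0_def Q0_def by auto
      then show ?thesis using ct False unfolding P_def Z_def Q_def by simp
    next
      case True
      have lsz: "l \<le> size P + size Z + size Q"
        using len_ge[OF gS] True HTg glen_m unfolding P_def Z_def Q_def by simp
      have cz: "coef (P0 - {#x#}) Z0 Q0 (LFZ n0 P Z Q) = 0"
        unfolding coef_LFZ[OF GT G]
      proof (rule sum_mset_zero)
        fix y assume y: "y \<in># Z"
        show "(if n0 + y \<le> N \<and> P = P0 - {#x#} \<and> Z - {#y#} = Z0 \<and> add_mset (n0+y) Q = Q0 then 2 else 0) = (0::complex)"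
        proof (rule ccontr)
          assume "(if n0 + y \<le> N \<and> P = P0 - {#x#} \<and> Z - {#y#} = Z0 \<and> add_mset (n0+y) Q = Q0 then 2 else 0) \<noteq> (0::complex)"
          then have c: "P = P0 - {#x#}" "Z - {#y#} = Z0" "add_mset (n0+y) Q = Q0" by (auto split: if_splits)
          have "size Q0 = size Q + 1" "size Z0 + 1 = size Z" using c sz1[OF y] by auto
          then show False using lsz l0 szP c(1) by simp
        qed
      qed
      have cq: "coef (P0 - {#x#}) Z0 Q0 (LFP n0 P Z Q) = (if g = g0 then of_nat (count P0 x) * (- \<phi> (L Hh N)) else 0)"
      proof (cases "g = g0")
        case True
        then have e: "P = P0" "Z = Z0" "Q = Q0" unfolding P_def Z_def Q_def P0_def Z0_def Q0_def by auto
        have "coef (P0 - {#x#}) Z0 Q0 (LFP n0 P Z Q) = (\<Sum>y\<in>#P0. if y = x then - \<phi> (L Hh N) else 0)"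
          unfolding e coef_LFP[OF GT G0]
        proof (rule sum_mset_cong')
          fix y assume y: "y \<in># P0"
          show "(if n0 + y \<le> -1 then (if P0 - {#y#} = P0 - {#x#} \<and> add_mset (n0+y) Z0 = Z0 \<and> Q0 = Q0 then -1 else 0)
            else if n0 + y = N then (if P0 - {#y#} = P0 - {#x#} \<and> Z0 = Z0 \<and> Q0 = Q0 then - \<phi> (L Hh N) else 0) else 0)
            = (if y = x then - \<phi> (L Hh N) else 0)"
            using N1 unfolding n0_def by auto
        qed
        then show ?thesis using True by (simp add: sum_mset_delta)
      next
        case False
        have "coef (P0 - {#x#}) Z0 Q0 (LFP n0 P Z Q) = 0"
          unfolding coef_LFP[OF GT G]
        proof (rule sum_mset_zero)
          fix y assume y: "y \<in># P"
          show "(if n0 + y \<le> -1 then (if P - {#y#} = P0 - {#x#} \<and> add_mset (n0+y) Z = Z0 \<and> Q = Q0 then -1 else 0)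
            else if n0 + y = N then (if P - {#y#} = P0 - {#x#} \<and> Z = Z0 \<and> Q = Q0 then - \<phi> (L Hh N) else 0) else 0) = 0"
          proof (cases "n0 + y \<le> -1")
            case True
            have "\<not> (P - {#y#} = P0 - {#x#} \<and> add_mset (n0+y) Z = Z0 \<and> Q = Q0)"
            proof
              assume c: "P - {#y#} = P0 - {#x#} \<and> add_mset (n0+y) Z = Z0 \<and> Q = Q0"
              have "size Z + 1 = size Z0" "size (P - {#y#}) + 1 = size P" using c sz1[OF y] by auto
              then show False using lsz l0 szP c by simp
            qed
            then show ?thesis using True by simp
          next
            case nT: False
            have "\<not> (n0 + y = N \<and> P - {#y#} = P0 - {#x#} \<and> Z = Z0 \<and> Q = Q0)"
            proof
              assume c: "n0 + y = N \<and> P - {#y#} = P0 - {#x#} \<and> Z = Z0 \<and> Q = Q0"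
              then have "y = x" unfolding n0_def by simp
              then have "P = P0" using c diff_eq_same[OF y] x by auto
              then have "g = g0" using c mt_inj[OF gG g0G] unfolding P_def Z_def Q_def P0_def Z0_def Q0_def by auto
              then show False using False by simp
            qed
            then show ?thesis using nT by auto
          qed
        qed
        then show ?thesis using False by simp
      qed
      show ?thesis using ct True cz cq unfolding P_def Z_def Q_def by (auto simp: coef_add)
    qed
  qed
  have "0 = coef (P0 - {#x#}) Z0 Q0 (act (L Ff n0) w)" using Fw[OF n0] by (simp add: coef_zero)
  also have "\<dots> = (\<Sum>g\<in>S. if g = g0 then a g0 * (of_nat (count P0 x) * (- \<phi> (L Hh N))) else 0)"
    unfolding coef_act using key by (intro sum.cong) auto
  also have "\<dots> = a g0 * (of_nat (count P0 x) * (- \<phi> (L Hh N)))" using fin g0 by simp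
  finally show False using g0 hN x by (simp add: count_eq_zero_iff)
qed

end


lemma mset_bar: "k < length ms \<Longrightarrow> mset (take k ms @ drop (Suc k) ms) = mset ms - {#ms!k#}"
proof -
  assume k: "k < length ms"
  have "mset ms = mset (take k ms @ ms!k # drop (Suc k) ms)" using id_take_nth_drop[OF k] by metis
  then have "mset ms = add_mset (ms!k) (mset (take k ms @ drop (Suc k) ms))" by simp
  then show ?thesis by simp
qed

lemma sorted_bar: "sorted ms \<Longrightarrow> sorted (take k ms @ drop (Suc k) ms)"
proof -
  assume s: "sorted ms"
  have s2: "sorted (take k ms @ drop k ms)" using s by simp
  have sub: "set (drop (Suc k) ms) \<subseteq> set (drop k ms)" by (rule set_drop_subset_set_drop) simp
  have s3: "sorted (drop (Suc k) ms)" using s by (simp add: sorted_wrt_drop)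
  show ?thesis using s2 sub s3 unfolding sorted_append by auto
qed

lemma set_bar: "set (take k ms @ drop (Suc k) ms) \<subseteq> set ms"
  using set_take_subset set_drop_subset by fastforce

lemma card_count: "card {j. j < length ms \<and> ms!j = ms!k} = count (mset ms) (ms!k)"
  unfolding count_mset count_list_eq_length_filter length_filter_conv_card by (intro arg_cong[where f=card]) auto

context SW begin

lemma part2: assumes g0: "([], ms, []) \<in> S" "gHt N ([], ms, []) = H" "glen ([], ms, []) = l"
    and k: "k < l" and i: "1 \<le> i" "i \<le> - (ms!k)"
  shows "a ([- i], take k ms @ drop (Suc k) ms, [N + ms!k + i])
     = 2 * a ([], ms, []) / \<phi> (L Hh N) * of_nat (card {j. j < l \<and> ms!j = ms!k})"
proof -
  define g0 :: triple where "g0 = ([], ms, [])"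
  define m where "m = ms!k"
  define Z0 where "Z0 = mset ms"
  define j where "j = - m - i"
  define n where "n = N + m + i"
  define bar where "bar = take k ms @ drop (Suc k) ms"
  define gi :: triple where "gi = ([- i], bar, [n])"
  have g0G: "g0 \<in> Gamma (-1) N" using g0 supp unfolding g0_def by auto
  have lms: "length ms = l" using g0(3) by (simp add: glen_def)
  have kl: "k < length ms" using k lms by simp
  have m: "m \<in># Z0" unfolding m_def Z0_def using kl by simp
  have sms: "sorted ms" and ms1: "\<forall>x\<in>set ms. x \<le> -1" using g0G unfolding g0_def Gamma_def Gamma_m_def by auto
  have m1: "m \<le> -1" using ms1 m unfolding Z0_def by auto
  have j0: "j \<ge> 0" using i unfolding j_def m_def by simp
  have nN: "n \<le> N" using i unfolding n_def m_def by simp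
  have jn: "j + n = N" unfolding j_def n_def by simp
  have mbar: "mset bar = Z0 - {#m#}" unfolding bar_def Z0_def m_def using mset_bar[OF kl] .
  have giG: "gi \<in> Gamma (-1) N"
    unfolding gi_def Gamma_def Gamma_m_def using i nN sorted_bar[OF sms, of k] set_bar[of k ms] ms1
    unfolding bar_def by auto
  have g0ne: "g0 \<noteq> gi" unfolding g0_def gi_def by simp
  have mg0: "mP g0 = {#}" "mZ g0 = Z0" "mQ g0 = {#}" unfolding g0_def mP_def mZ_def mQ_def Z0_def by auto
  have mgi: "mP gi = {#-i#}" "mZ gi = Z0 - {#m#}" "mQ gi = {#n#}" unfolding gi_def mP_def mZ_def mQ_def using mbar by auto
  have G0: "inG {#} Z0 {#}" using inGg[OF g0G] mg0 by simp
  have GT: "inG {#-i#} (Z0 - {#m#}) {#}" using G0 i by (simp add: inG_diff)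
  have HT0: "HT {#} Z0 {#} = H" using g0(2) HTg[of g0] mg0 unfolding g0_def by simp
  have HTT: "HT {#-i#} (Z0 - {#m#}) {#} = H - j" using HT_diff(2)[OF m, of "{#}" "{#}"] HT0 unfolding j_def by simp
  have HTi: "gHt N gi = H" using HTg[of gi] mgi HTT HT_diff(2)[OF m, of "{#}" "{#}"] jn by (simp add: algebra_simps)
  have l0: "size Z0 = l" unfolding Z0_def using lms by simp
  have szZ: "size (Z0 - {#m#}) + 1 = size Z0" using sz1[OF m] .
  define cnt :: complex where "cnt = of_nat (count Z0 m)"
  have key: "a g * coef {#-i#} (Z0 - {#m#}) {#} (act (L Ee j) (b (mP g) (mZ g) (mQ g)))
      = (if g = g0 then a g0 * (cnt * (-2)) else 0) + (if g = gi then a gi * \<phi> (L Hh N) else 0)" if gS: "g \<in> S" for g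
  proof -
    define P where "P = mP g"
    define Z where "Z = mZ g"
    define Q where "Q = mQ g"
    have gG: "g \<in> Gamma (-1) N" using gS supp by auto
    have G: "inG P Z Q" unfolding P_def Z_def Q_def by (rule inGg[OF gG])
    have HTle: "HT P Z Q \<le> H" using HT_le[OF gS] HTg unfolding P_def Z_def Q_def by simp
    have ct: "coef {#-i#} (Z0 - {#m#}) {#} (act (L Ee j) (b P Z Q)) =
       (if HT P Z Q = H then coef {#-i#} (Z0 - {#m#}) {#} (LZ j P Z Q + LQ j P Z Q) else 0)"
      by (rule coef_top_e[OF j0 G GT HTle HTT])
    show ?thesis
    proof (cases "HT P Z Q = H")
      case False
      then have "g \<noteq> g0" "g \<noteq> gi" using HT0 HTi HTg[of g] mg0 unfolding P_def Z_def Q_def by auto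
      then show ?thesis using ct False unfolding P_def Z_def Q_def by simp
    next
      case HTH: True
      have lsz: "l \<le> size P + size Z + size Q"
        using len_ge[OF gS] HTH HTg glen_m unfolding P_def Z_def Q_def by simp
      have cz: "coef {#-i#} (Z0 - {#m#}) {#} (LZ j P Z Q) = (if g = g0 then cnt * (-2) else 0)"
      proof (cases "g = g0")
        case True
        then have e: "P = {#}" "Z = Z0" "Q = {#}" using mg0 unfolding P_def Z_def Q_def by auto
        have "coef {#-i#} (Z0 - {#m#}) {#} (LZ j P Z Q) = (\<Sum>y\<in>#Z0. if y = m then -2 else 0)"
          unfolding e coef_LZ[OF GT G0]
        proof (rule sum_mset_cong')
          fix y assume y: "y \<in># Z0"
          show "(if j + y \<le> -1 \<and> add_mset (j+y) {#} = {#-i#} \<and> Z0 - {#y#} = Z0 - {#m#} \<and> {#} = ({#}::int multiset) then -2 else 0)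
            = (if y = m then -2 else (0::complex))"
            using i unfolding j_def by auto
        qed
        then show ?thesis using True unfolding cnt_def by (simp add: sum_mset_delta)
      next
        case False
        have "coef {#-i#} (Z0 - {#m#}) {#} (LZ j P Z Q) = 0"
          unfolding coef_LZ[OF GT G]
        proof (rule sum_mset_zero)
          fix y assume y: "y \<in># Z"
          show "(if j + y \<le> -1 \<and> add_mset (j+y) P = {#-i#} \<and> Z - {#y#} = Z0 - {#m#} \<and> Q = {#} then -2 else 0) = (0::complex)"
          proof (rule ccontr)
            assume "(if j + y \<le> -1 \<and> add_mset (j+y) P = {#-i#} \<and> Z - {#y#} = Z0 - {#m#} \<and> Q = {#} then -2 else 0) \<noteq> (0::complex)"
            then have c: "add_mset (j+y) P = {#-i#}" "Z - {#y#} = Z0 - {#m#}" "Q = {#}" by (auto split: if_splits)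
            then have "P = {#}" "j + y = -i" by (auto simp: single_is_union add_mset_eq_single)
            then have "y = m" unfolding j_def by simp
            then have "Z = Z0" using c(2) y m diff_eq_same[of m Z Z0] by simp
            then have "g = g0" using c \<open>P = {#}\<close> mt_inj[OF gG g0G] mg0 unfolding P_def Z_def Q_def by auto
            then show False using False by simp
          qed
        qed
        then show ?thesis using False by simp
      qed
      have cq: "coef {#-i#} (Z0 - {#m#}) {#} (LQ j P Z Q) = (if g = gi then \<phi> (L Hh N) else 0)"
      proof (cases "g = gi")
        case True
        then have e: "P = {#-i#}" "Z = Z0 - {#m#}" "Q = {#n#}" using mgi unfolding P_def Z_def Q_def by auto
        show ?thesis unfolding e coef_LQ[OF GT G[unfolded e]] using True jn N1 by auto
      next
        case False
        have "coef {#-i#} (Z0 - {#m#}) {#} (LQ j P Z Q) = 0"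
          unfolding coef_LQ[OF GT G]
        proof (rule sum_mset_zero)
          fix y assume y: "y \<in># Q"
          show "(if j + y \<le> -1 then (if P = {#-i#} \<and> add_mset (j+y) Z = Z0 - {#m#} \<and> Q - {#y#} = {#} then 1 else 0)
            else if j + y = N then (if P = {#-i#} \<and> Z = Z0 - {#m#} \<and> Q - {#y#} = {#} then \<phi> (L Hh N) else 0) else 0) = 0"
          proof (cases "j + y \<le> -1")
            case True
            have "\<not> (P = {#-i#} \<and> add_mset (j+y) Z = Z0 - {#m#} \<and> Q - {#y#} = {#})"
            proof
              assume c: "P = {#-i#} \<and> add_mset (j+y) Z = Z0 - {#m#} \<and> Q - {#y#} = {#}"
              have "size Z + 1 = size (Z0 - {#m#})" using c by (metis Suc_eq_plus1 size_add_mset)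
              moreover have "size (Q - {#y#}) + 1 = size Q" using sz1[OF y] .
              ultimately have "glen g = l" using c l0 szZ glen_m unfolding P_def Z_def Q_def by simp
              then have "fst g = []" using part1_p[OF gS] HTH HTg[of g] unfolding P_def Z_def Q_def by simp
              then show False using c unfolding P_def mP_def by simp
            qed
            then show ?thesis using True by simp
          next
            case nT: False
            have "\<not> (j + y = N \<and> P = {#-i#} \<and> Z = Z0 - {#m#} \<and> Q - {#y#} = {#})"
            proof
              assume c: "j + y = N \<and> P = {#-i#} \<and> Z = Z0 - {#m#} \<and> Q - {#y#} = {#}"
              then have "y = n" using jn by simp
              then have "Q = {#n#}" using c y by (metis add_mset_remove_trivial_eq insert_DiffM)
              then have "g = gi" using c mt_inj[OF gG giG] mgi unfolding P_def Z_def Q_def by auto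
              then show False using False by simp
            qed
            then show ?thesis using nT by auto
          qed
        qed
        then show ?thesis using False by simp
      qed
      show ?thesis using ct HTH cz cq g0ne unfolding P_def Z_def Q_def by (auto simp: coef_add algebra_simps)
    qed
  qed
  have "0 = coef {#-i#} (Z0 - {#m#}) {#} (act (L Ee j) w)" using Ew[OF j0] by (simp add: coef_zero)
  also have "\<dots> = (\<Sum>g\<in>S. (if g = g0 then a g0 * (cnt * (-2)) else 0) + (if g = gi then a gi * \<phi> (L Hh N) else 0))"
    unfolding coef_act using key by (intro sum.cong) auto
  also have "\<dots> = a g0 * (cnt * (-2)) + (if gi \<in> S then a gi * \<phi> (L Hh N) else 0)"
    using fin g0 unfolding g0_def by (simp add: sum.distrib)
  also have "\<dots> = a g0 * (cnt * (-2)) + a gi * \<phi> (L Hh N)" by auto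
  finally have "a gi * \<phi> (L Hh N) = 2 * a g0 * cnt" by (simp add: algebra_simps)
  then have "a gi = 2 * a g0 / \<phi> (L Hh N) * cnt" using hN by (simp add: field_simps)
  moreover have "cnt = of_nat (card {j. j < l \<and> ms!j = ms!k})"
    unfolding cnt_def Z0_def m_def using card_count[of ms k] lms by simp
  ultimately show ?thesis unfolding gi_def g0_def bar_def n_def m_def by simp
qed

end

theorem mainTheorem4:
  fixes N :: int
    and \<phi> :: "gen \<Rightarrow> complex"
    and scale :: "complex \<Rightarrow> 'v::ab_group_add \<Rightarrow> 'v"
    and act :: "gen \<Rightarrow> 'v \<Rightarrow> 'v"
    and v w :: 'v
    and a :: "triple \<Rightarrow> complex"
    and H :: int and l :: nat
  assumes N: "N \<ge> 1"
    and hom: "lie_hom_S (-1) N \<phi>"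
    and hN: "\<phi> (L Hh N) \<noteq> 0"
    and M: "induced_module (-1) N \<phi> scale act v"
    and fin: "finite {\<gamma>. a \<gamma> \<noteq> 0}"
    and supp: "{\<gamma>. a \<gamma> \<noteq> 0} \<subseteq> Gamma (-1) N"
    and w: "w = (\<Sum>\<gamma>\<in>{\<gamma>. a \<gamma> \<noteq> 0}. scale (a \<gamma>) (Xact act \<gamma> v))"
    and sing: "singular (-1) N \<phi> scale act w"
    and notv: "\<forall>c. w \<noteq> scale c v"
    and H: "H = Max (gHt N ` {\<gamma>. a \<gamma> \<noteq> 0})"
    and l: "l = Min (glen ` {\<gamma>. a \<gamma> \<noteq> 0 \<and> gHt N \<gamma> = H})"
  shows "(\<forall>\<gamma>. a \<gamma> \<noteq> 0 \<and> gHt N \<gamma> = H \<and> glen \<gamma> = l \<longrightarrow>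
            fst \<gamma> = [] \<and> snd (snd \<gamma>) = [])
       \<and> (\<forall>ms k i. a ([], ms, []) \<noteq> 0 \<and> gHt N ([], ms, []) = H \<and> glen ([], ms, []) = l
            \<and> k < l \<and> 1 \<le> i \<and> i \<le> - (ms ! k) \<longrightarrow>
            a ([- i], take k ms @ drop (Suc k) ms, [N + ms ! k + i])
              = 2 * a ([], ms, []) / \<phi> (L Hh N) * of_nat (card {j. j < l \<and> ms ! j = ms ! k}))"
proof -
  have mod: "module scale" using M unfolding induced_module_def hatg_module_def by blast
  have Ew: "act (L Ee j) w = 0" if "j \<ge> 0" for j
  proof -
    have A: "\<forall>i::int. i \<ge> 1 \<longrightarrow> act (L Ee (-1 + i)) w = 0" using sing unfolding singular_def by blast
    have "act (L Ee (-1 + (j + 1))) w = 0" using A[rule_format, of "j+1"] that by simp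
    then show ?thesis by simp
  qed
  have Fw: "act (L Ff n) w = 0" if "n > N" for n
  proof -
    have A: "\<forall>i::int. i \<ge> 1 \<longrightarrow> act (L Ff (N + i)) w = 0" using sing unfolding singular_def by blast
    have "act (L Ff (N + (n - N))) w = 0" using A[rule_format, of "n - N"] that by simp
    then show ?thesis by simp
  qed
  interpret SW scale act v \<phi> N a w H l
  proof (unfold_locales)
    show "scale a (x + y) = scale a x + scale a y" for a x y using mod unfolding module_def by blast
    show "scale (a + b) x = scale a x + scale b x" for a b x using mod unfolding module_def by blast
    show "scale a (scale b x) = scale (a * b) x" for a b x using mod unfolding module_def by blast
    show "scale 1 x = x" for x using mod unfolding module_def by blast
  qed (use N hom M fin supp w H l hN Ew Fw in simp_all)
  show ?thesis
  proof (intro conjI allI impI)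
    fix g assume g: "a g \<noteq> 0 \<and> gHt N g = H \<and> glen g = l"
    show "fst g = []" using part1_p g by blast
    show "snd (snd g) = []" using part1_q g by blast
  next
    fix ms k i
    assume h: "a ([], ms, []) \<noteq> 0 \<and> gHt N ([], ms, []) = H \<and> glen ([], ms, []) = l \<and> k < l \<and> 1 \<le> i \<and> i \<le> - (ms ! k)"
    show "a ([- i], take k ms @ drop (Suc k) ms, [N + ms ! k + i]) =
         2 * a ([], ms, []) / \<phi> (L Hh N) * of_nat (card {j. j < l \<and> ms ! j = ms ! k})"
      using part2[of ms k i] h by simp
  qed
qed

end
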